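(* Let $A$ be a parametric timed B\"uchi automaton and $\alpha$ a finite abstraction over its symbolic semantics $[\![A]\!]$. A parameter valuation $v$ is contained in the output set $Accepted$ of $CumulativeNDFS([\![A]\!]^\alpha)$ if and only if there exists an accepting run respecting $v$ in $[\![A]\!]^\alpha$.
   Context: Parameters and guards. $P$ is a finite set of parameters; affine expressions $z_0+\sum z_ip_i$ ($z_i\in\mathbb Z$, $p_i\in P$) form $E(P)$. A parameter valuation is $v:P\to\mathbb Z$; bounds $lb,ub:P\to\mathbb Z$ are fixed. $X$ is a finite set of clocks with a zero clock $x_0$. A guard is a finite conjunction of $x_i-x_j\sim e$, $e\in E(P)$, $\sim\in\{\le,<\}$; simple if always $x_i=x_0$ or $x_j=x_0$. Clock valuations $\eta:X\to\mathbb R_{\ge0}$ with $\eta(x_0)=0$; $\eta+d$ delays, $\eta\langle R\rangle$ resets $R$. A PTA is $M=(L,l_0,X,P,\Delta,Inv)$, $\Delta\subseteq L\times(\text{simple guards})\times2^X\times L$, $Inv$ maps locations to simple guards; $[\![M]\!]_v$ has states $(l,\eta)$, initial $(l_0,\mathbf0)$, delay steps $(l,\eta)\xrightarrow{d}(l,\eta+d)$ if $(v,\eta+d)\models Inv(l)$, action steps $(l,\eta)\xrightarrow{act}(l',\eta\langle R\rangle)$ if $(l,g,R,l')\in\Delta$, $(v,\eta)\models g$, $(v,\eta\langle R\rangle)\models Inv(l')$. A PTBA is $A=(M,F)$ with accepting locations $F\subseteq L$. Constraints $e\sim e'$, constraint sets $C$ (finite), $[\![C]\!]$ = satisfying valuations,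 $C\models c$ iff $[\![C]\!]\subseteq[\![c]\!]$. A PDBM $D$ has entries $D_{ij}:x_i-x_j\prec_{ij}e_{ij}$ ($0\le i,j\le|X|$, $\prec_{ij}\in\{\le,<\}$, $e_{ij}\in E(P)\cup\{\infty\}$, $e_{ii}=0$); a CPDBM is $(C,D)$ with $C\models e_{0i}\ge0$; $[\![C,D]\!]=\{(v,\eta):v\in[\![C]\!],\eta\text{ satisfies }D\text{ under }v\}$. Identify $\le$ with true, $<$ with false. Reset $(C,D)\langle x_r\rangle$: entries $rj:=D_{0j}$, $ir:=D_{i0}$ ($i,j\ne r$). Time successor: entries $i0:=(\infty,<)$ for $i\neq0$. Guard $g:x_i-x_j\prec e$, $c:=e_{ij}(\prec_{ij}\Rightarrow\prec)e$: $(C,D)[g]=\{(C,D[g])\}$ if $C\models\neg c$, $\{(C,D)\}$ if $C\models c$, else $\{(C\cup\{c\},D),(C\cup\{\neg c\},D[g])\}$, $D[g]$ setting entry $ij$ to $(e,\prec)$; conjunctions sequentially. Canonisation $(C,D)_c$: all outcomes of nondeterministic Floyd–Warshall, replacing for $k,i,j=0..|X|$ (in that nesting order) the current $(C,D)$ by an element of $(C,D)[x_i-x_j(\prec_{ik}\wedge\prec_{kj})e_{ik}+e_{kj}]$. Symbolic semantics $[\![A]\!]$: states $(l,[\![C,D]\!])$, with $s.[\![C]\!]:=[\![C]\!]$ for $s=(l,[\![C,D]\!])$; accepting if $l\in F$. Initial states $(l_0,[\![C,D]\!])$, $(C,D)\in(C_0,E^\uparrow)[Inv(l_0)]$, $E$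 all entries $(0,\le)$, $C_0=\{lb(p)\le p,p\le ub(p)\}$. $(l,[\![C,D]\!])\Longrightarrow(l',[\![C'_c,D'_c]\!])$ iff $(l,g,R,l')\in\Delta$, $(C'',D'')\in(C,D)[g]$, $(C''_c,D''_c)\in(C'',D'')_c$, $(C',D')\in(C''_c,D''_c\langle R\rangle^\uparrow)[Inv(l')]$, $(C'_c,D'_c)\in(C',D')_c$. Abstraction: $s\in_vS$ for concrete $s=(l,\eta)$, symbolic $S=(l,[\![C,D]\!])$ means $v\in[\![C]\!]$ and $\eta$ satisfies $D$ under $v$; $\preccurlyeq$ is the largest time-abstracting simulation on $[\![M]\!]_v$. An abstraction $\alpha$ maps symbolic states to sets of symbolic states with (i) $(l',[\![C',D']\!])\in\alpha((l,[\![C,D]\!]))\Rightarrow l=l'$, $[\![C']\!]\subseteq[\![C]\!]$, $[\![C',D]\!]\subseteq[\![C',D']\!]$; (ii) for each $v\in[\![C]\!]$ there are $S_1$, $S_2\in\alpha(S_1)$ with every $s\in_vS_2$ simulated ($s\preccurlyeq s'$) by some $s'\in_vS_1$. It is finite if its image is finite. $[\![A]\!]^\alpha$: states $\{S\in\alpha(S')\}$, initial states images of initial states, $Q\Longrightarrow^\alpha Q'$ iff $Q\Longrightarrow S$, $Q'\in\alpha(S)$. A run of $[\![A]\!]^\alpha$ is an infinite $\Longrightarrow^\alpha$-path from an initial state; accepting if it visits accepting states infinitely often; respects $v$ if $v\in s.[\![C]\!]$ for every state $s$ on it. Algorithm CumulativeNDFS on the finite graph $G=[\![A]\!]^\alpha$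 (initial state $s_{init}$): initialise $Found,Stack,Outer,Inner:=\emptyset$; call $OuterDFS(s_{init})$; return $Accepted:=Found$. $OuterDFS(s)$: add $s$ to $Stack$ and $Outer$; for each successor $s'$ of $s$, if $s'\notin Outer$, $s'\notin Stack$ and $s'.[\![C]\!]\not\subseteq Found$, call $OuterDFS(s')$; after the loop, if $s$ is accepting and $s.[\![C]\!]\not\subseteq Found$, call $InnerDFS(s)$; then remove $s$ from $Stack$. $InnerDFS(s)$: add $s$ to $Inner$; for each successor $s'$ of $s$: if $s'\in Stack$, set $Found:=Found\cup s'.[\![C]\!]$ and return; if $s'\notin Inner$ and $s'.[\![C]\!]\not\subseteq Found$, call $InnerDFS(s')$. *)

theory Defs
  imports Main "HOL-Library.Extended_Real"
begin

section \<open>Parameters, affine expressions, guards\<close>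

text \<open>The finite parameter set P is the finite type 'p. An affine expression
  z0 + sum z_i p_i is a pair (z0, coefficient function). Clocks are the natural
  numbers 0..n, clock 0 being the zero clock x0; n = |X| - 1 is the number of
  non-zero clocks.\<close>

type_synonym 'p aexp = "int \<times> ('p \<Rightarrow> int)"
type_synonym 'p pval = "'p \<Rightarrow> int"

definition aeval :: "('p::finite) pval \<Rightarrow> 'p aexp \<Rightarrow> int" where
  "aeval v e = fst e + (\<Sum>p\<in>UNIV. snd e p * v p)"

text \<open>Guard atom (i, j, le, e) stands for x_i - x_j \<prec> e, where le = True means \<le>
  and le = False means <. A guard is a finite conjunction (list) of atoms.\<close>
type_synonym 'p gatom = "nat \<times> nat \<times> bool \<times> 'p aexp"
type_synonym 'p guard = "'p gatom list"

definition simple_guard :: "nat \<Rightarrow> 'p guard \<Rightarrow> bool" where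
  "simple_guard n g = (\<forall>(i,j,le,e)\<in>set g. i \<le> n \<and> j \<le> n \<and> (i = 0 \<or> j = 0))"

type_synonym cval = "nat \<Rightarrow> real"

definition valid_clk :: "nat \<Rightarrow> cval \<Rightarrow> bool" where
  "valid_clk n \<eta> = (\<eta> 0 = 0 \<and> (\<forall>i. 0 \<le> \<eta> i) \<and> (\<forall>i>n. \<eta> i = 0))"

definition guard_sat :: "('p::finite) pval \<Rightarrow> cval \<Rightarrow> 'p guard \<Rightarrow> bool" where
  "guard_sat v \<eta> g = (\<forall>(i,j,le,e)\<in>set g.
     (if le then \<eta> i - \<eta> j \<le> real_of_int (aeval v e) else \<eta> i - \<eta> j < real_of_int (aeval v e)))"

definition delay :: "nat \<Rightarrow> cval \<Rightarrow> real \<Rightarrow> cval" where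
  "delay n \<eta> d = (\<lambda>i. if 1 \<le> i \<and> i \<le> n then \<eta> i + d else \<eta> i)"

definition resetv :: "cval \<Rightarrow> nat set \<Rightarrow> cval" where
  "resetv \<eta> R = (\<lambda>i. if i \<in> R then 0 else \<eta> i)"

section \<open>Parametric timed (Buechi) automata\<close>

record ('l, 'p) ptba =
  locs :: "'l set"
  init_loc :: 'l
  nclk :: nat
  trans :: "('l \<times> 'p guard \<times> nat set \<times> 'l) set"
  inv :: "'l \<Rightarrow> 'p guard"
  accs :: "'l set"

definition ptba :: "('l, 'p) ptba \<Rightarrow> bool" where
  "ptba A = (finite (locs A) \<and> init_loc A \<in> locs A \<and> finite (trans A) \<and>
     (\<forall>(l,g,R,l')\<in>trans A. l \<in> locs A \<and> l' \<in> locs A \<and> simple_guard (nclk A) g \<and>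
         R \<subseteq> {1..nclk A}) \<and>
     (\<forall>l. simple_guard (nclk A) (inv A l)) \<and> accs A \<subseteq> locs A)"

definition cdelay :: "('l, 'p::finite) ptba \<Rightarrow> 'p pval \<Rightarrow> ('l \<times> cval) \<Rightarrow> ('l \<times> cval) \<Rightarrow> bool" where
  "cdelay A v s s' = (\<exists>d\<ge>0. fst s' = fst s \<and> snd s' = delay (nclk A) (snd s) d \<and>
      guard_sat v (snd s') (inv A (fst s)))"

definition caction :: "('l, 'p::finite) ptba \<Rightarrow> 'p pval \<Rightarrow> ('l \<times> cval) \<Rightarrow> ('l \<times> cval) \<Rightarrow> bool" where
  "caction A v s s' = (\<exists>g R. (fst s, g, R, fst s') \<in> trans A \<and> guard_sat v (snd s) g \<and>
      snd s' = resetv (snd s) R \<and> guard_sat v (snd s') (inv A (fst s')))"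

definition tasim :: "('l, 'p::finite) ptba \<Rightarrow> 'p pval \<Rightarrow> ('l \<times> cval \<Rightarrow> 'l \<times> cval \<Rightarrow> bool) \<Rightarrow> bool" where
  "tasim A v Rel = (\<forall>s t. Rel s t \<longrightarrow> fst s = fst t \<and>
      (\<forall>s'. cdelay A v s s' \<longrightarrow> (\<exists>t'. cdelay A v t t' \<and> Rel s' t')) \<and>
      (\<forall>s'. caction A v s s' \<longrightarrow> (\<exists>t'. caction A v t t' \<and> Rel s' t')))"

definition sim :: "('l, 'p::finite) ptba \<Rightarrow> 'p pval \<Rightarrow> 'l \<times> cval \<Rightarrow> 'l \<times> cval \<Rightarrow> bool" where
  "sim A v s t = (\<exists>Rel. tasim A v Rel \<and> Rel s t)"

section \<open>Constraints and parametric DBMs\<close>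

text \<open>Extended expressions: None stands for \<infinity>.  A constraint (a, le, b) means
  a \<le> b (le = True) or a < b (le = False).\<close>
type_synonym 'p xexp = "'p aexp option"
type_synonym 'p cstr = "'p xexp \<times> bool \<times> 'p xexp"
type_synonym 'p dbm = "nat \<Rightarrow> nat \<Rightarrow> 'p xexp \<times> bool"

fun xeval :: "('p::finite) pval \<Rightarrow> 'p xexp \<Rightarrow> ereal" where
  "xeval v None = PInfty"
| "xeval v (Some e) = ereal (real_of_int (aeval v e))"

definition csat :: "('p::finite) pval \<Rightarrow> 'p cstr \<Rightarrow> bool" where
  "csat v c = (case c of (a, le, b) \<Rightarrow>
      (if le then xeval v a \<le> xeval v b else xeval v a < xeval v b))"

definition cneg :: "'p cstr \<Rightarrow> 'p cstr" where
  "cneg c = (case c of (a, le, b) \<Rightarrow> (b, \<not> le, a))"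

definition csem :: "('p::finite) cstr set \<Rightarrow> 'p pval set" where
  "csem C = {v. \<forall>c\<in>C. csat v c}"

definition entails :: "('p::finite) cstr set \<Rightarrow> 'p cstr \<Rightarrow> bool" where
  "entails C c = (csem C \<subseteq> {v. csat v c})"

definition entry_sat :: "('p::finite) pval \<Rightarrow> cval \<Rightarrow> nat \<Rightarrow> nat \<Rightarrow> 'p xexp \<times> bool \<Rightarrow> bool" where
  "entry_sat v \<eta> i j b = (if snd b then ereal (\<eta> i - \<eta> j) \<le> xeval v (fst b)
                          else ereal (\<eta> i - \<eta> j) < xeval v (fst b))"

definition zsem :: "nat \<Rightarrow> ('p::finite) cstr set \<Rightarrow> 'p dbm \<Rightarrow> ('p pval \<times> cval) set" where
  "zsem n C D = {(v, \<eta>). v \<in> csem C \<and> valid_clk n \<eta> \<and>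
      (\<forall>i\<le>n. \<forall>j\<le>n. entry_sat v \<eta> i j (D i j))}"

type_synonym 'p xatom = "nat \<times> nat \<times> bool \<times> 'p xexp"

definition atom_apply :: "('p::finite) cstr set \<times> 'p dbm \<Rightarrow> 'p xatom \<Rightarrow> ('p cstr set \<times> 'p dbm) set" where
  "atom_apply X a = (case X of (C, D) \<Rightarrow> case a of (i, j, le, e) \<Rightarrow>
     (let c = (fst (D i j), snd (D i j) \<longrightarrow> le, e);
          D' = D(i := (D i)(j := (e, le)))
      in if entails C (cneg c) then {(C, D')}
         else if entails C c then {(C, D)}
         else {(insert c C, D), (insert (cneg c) C, D')}))"

fun guard_apply :: "('p::finite) cstr set \<times> 'p dbm \<Rightarrow> 'p xatom list \<Rightarrow> ('p cstr set \<times> 'p dbm) set" where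
  "guard_apply X [] = {X}"
| "guard_apply X (a # as) = (\<Union>Y\<in>atom_apply X a. guard_apply Y as)"

definition to_xatom :: "'p gatom \<Rightarrow> 'p xatom" where
  "to_xatom a = (case a of (i, j, le, e) \<Rightarrow> (i, j, le, Some e))"

fun xadd :: "'p xexp \<Rightarrow> 'p xexp \<Rightarrow> 'p xexp" where
  "xadd (Some (z1, f1)) (Some (z2, f2)) = Some (z1 + z2, \<lambda>p. f1 p + f2 p)"
| "xadd _ _ = None"

definition canon_step :: "('p::finite) cstr set \<times> 'p dbm \<Rightarrow> nat \<times> nat \<times> nat \<Rightarrow> ('p cstr set \<times> 'p dbm) set" where
  "canon_step X t = (case t of (k, i, j) \<Rightarrow>
     (let D = snd X in atom_apply X (i, j, snd (D i k) \<and> snd (D k j), xadd (fst (D i k)) (fst (D k j)))))"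

fun canon_steps :: "('p::finite) cstr set \<times> 'p dbm \<Rightarrow> (nat \<times> nat \<times> nat) list \<Rightarrow> ('p cstr set \<times> 'p dbm) set" where
  "canon_steps X [] = {X}"
| "canon_steps X (t # ts) = (\<Union>Y\<in>canon_step X t. canon_steps Y ts)"

text \<open>Nondeterministic Floyd-Warshall, loops k, i, j = 0..n in this nesting order.\<close>
definition canon :: "nat \<Rightarrow> ('p::finite) cstr set \<times> 'p dbm \<Rightarrow> ('p cstr set \<times> 'p dbm) set" where
  "canon n X = canon_steps X [(k, i, j). k \<leftarrow> [0..<Suc n], i \<leftarrow> [0..<Suc n], j \<leftarrow> [0..<Suc n]]"

definition reset1 :: "'p dbm \<Rightarrow> nat \<Rightarrow> 'p dbm" where
  "reset1 D r = (\<lambda>i j. if i = r \<and> j \<noteq> r then D 0 j else if j = r \<and> i \<noteq> r then D i 0 else D i j)"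

definition resetD :: "'p dbm \<Rightarrow> nat set \<Rightarrow> 'p dbm" where
  "resetD D R = fold (\<lambda>r D. reset1 D r) (sorted_list_of_set R) D"

definition up :: "'p dbm \<Rightarrow> 'p dbm" where
  "up D = (\<lambda>i j. if i \<noteq> 0 \<and> j = 0 then (None, False) else D i j)"

definition Edbm :: "'p dbm" where
  "Edbm = (\<lambda>i j. (Some (0, \<lambda>_. 0), True))"

definition pvar :: "'p \<Rightarrow> 'p xexp" where
  "pvar p = Some (0, \<lambda>q. if q = p then 1 else 0)"

definition pconst :: "int \<Rightarrow> 'p xexp" where
  "pconst z = Some (z, \<lambda>_. 0)"

definition C0 :: "('p \<Rightarrow> int) \<Rightarrow> ('p \<Rightarrow> int) \<Rightarrow> 'p cstr set" where
  "C0 lb ub = (\<Union>p. {(pconst (lb p), True, pvar p), (pvar p, True, pconst (ub p))})"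

section \<open>Symbolic semantics\<close>

text \<open>A symbolic state (l, [[C,D]]) is represented semantically as the triple
  (l, [[C]], [[C,D]]), so that s.[[C]] is well defined.\<close>
type_synonym ('l, 'p) sstate = "'l \<times> 'p pval set \<times> ('p pval \<times> cval) set"

definition mk_state :: "nat \<Rightarrow> 'l \<Rightarrow> ('p::finite) cstr set \<Rightarrow> 'p dbm \<Rightarrow> ('l, 'p) sstate" where
  "mk_state n l C D = (l, csem C, zsem n C D)"

definition pset :: "('l, 'p) sstate \<Rightarrow> 'p pval set" where
  "pset S = fst (snd S)"

definition zone :: "('l, 'p) sstate \<Rightarrow> ('p pval \<times> cval) set" where
  "zone S = snd (snd S)"

definition sym_init :: "('l, 'p::finite) ptba \<Rightarrow> ('p \<Rightarrow> int) \<Rightarrow> ('p \<Rightarrow> int) \<Rightarrow> ('l, 'p) sstate set" where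
  "sym_init A lb ub = {mk_state (nclk A) (init_loc A) C D | C D.
     (C, D) \<in> guard_apply (C0 lb ub, up Edbm) (map to_xatom (inv A (init_loc A)))}"

definition sym_step :: "('l, 'p::finite) ptba \<Rightarrow> ('l, 'p) sstate \<Rightarrow> ('l, 'p) sstate \<Rightarrow> bool" where
  "sym_step A Q S = (\<exists>l C D g R l' C2 D2 C3 D3 C4 D4 C5 D5.
      finite C \<and> Q = mk_state (nclk A) l C D \<and> (l, g, R, l') \<in> trans A \<and>
      (C2, D2) \<in> guard_apply (C, D) (map to_xatom g) \<and>
      (C3, D3) \<in> canon (nclk A) (C2, D2) \<and>
      (C4, D4) \<in> guard_apply (C3, up (resetD D3 R)) (map to_xatom (inv A l')) \<and>
      (C5, D5) \<in> canon (nclk A) (C4, D4) \<and>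
      S = mk_state (nclk A) l' C5 D5)"

section \<open>Abstractions and the abstract semantics\<close>

text \<open>The symbolic states to which the abstraction is applied: initial states of
  [[A]] and all [[A]]-successors of states in the image of alpha.\<close>
inductive_set absdom :: "('l, 'p::finite) ptba \<Rightarrow> ('p \<Rightarrow> int) \<Rightarrow> ('p \<Rightarrow> int) \<Rightarrow>
    (('l, 'p) sstate \<Rightarrow> ('l, 'p) sstate set) \<Rightarrow> ('l, 'p) sstate set"
  for A lb ub \<alpha> where
  dom_init: "S \<in> sym_init A lb ub \<Longrightarrow> S \<in> absdom A lb ub \<alpha>"
| dom_step: "S \<in> absdom A lb ub \<alpha> \<Longrightarrow> Q \<in> \<alpha> S \<Longrightarrow> sym_step A Q S' \<Longrightarrow> S' \<in> absdom A lb ub \<alpha>"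

definition in_v :: "'p pval \<Rightarrow> 'l \<times> cval \<Rightarrow> ('l, 'p) sstate \<Rightarrow> bool" where
  "in_v v s S = (fst s = fst S \<and> v \<in> pset S \<and> (v, snd s) \<in> zone S)"

definition is_abstraction :: "('l, 'p::finite) ptba \<Rightarrow> ('p \<Rightarrow> int) \<Rightarrow> ('p \<Rightarrow> int) \<Rightarrow>
    (('l, 'p) sstate \<Rightarrow> ('l, 'p) sstate set) \<Rightarrow> bool" where
  "is_abstraction A lb ub \<alpha> = (\<forall>S\<in>absdom A lb ub \<alpha>.
     (\<forall>Q\<in>\<alpha> S. \<exists>C' D'. finite C' \<and> Q = mk_state (nclk A) (fst S) C' D' \<and>
         csem C' \<subseteq> pset S \<and> {(v, \<eta>). (v, \<eta>) \<in> zone S \<and> v \<in> csem C'} \<subseteq> zsem (nclk A) C' D') \<and>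
     (\<forall>v\<in>pset S. \<exists>S2\<in>\<alpha> S. v \<in> pset S2 \<and>
         (\<forall>s. in_v v s S2 \<longrightarrow> (\<exists>s'. in_v v s' S \<and> sim A v s s'))))"

definition finite_abstraction :: "('l, 'p::finite) ptba \<Rightarrow> ('p \<Rightarrow> int) \<Rightarrow> ('p \<Rightarrow> int) \<Rightarrow>
    (('l, 'p) sstate \<Rightarrow> ('l, 'p) sstate set) \<Rightarrow> bool" where
  "finite_abstraction A lb ub \<alpha> = finite (\<Union>S\<in>absdom A lb ub \<alpha>. \<alpha> S)"

definition abs_init :: "('l, 'p::finite) ptba \<Rightarrow> ('p \<Rightarrow> int) \<Rightarrow> ('p \<Rightarrow> int) \<Rightarrow>
    (('l, 'p) sstate \<Rightarrow> ('l, 'p) sstate set) \<Rightarrow> ('l, 'p) sstate set" where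
  "abs_init A lb ub \<alpha> = (\<Union>S\<in>sym_init A lb ub. \<alpha> S)"

definition abs_step :: "('l, 'p::finite) ptba \<Rightarrow> (('l, 'p) sstate \<Rightarrow> ('l, 'p) sstate set) \<Rightarrow>
    ('l, 'p) sstate \<Rightarrow> ('l, 'p) sstate \<Rightarrow> bool" where
  "abs_step A \<alpha> Q Q' = (\<exists>S. sym_step A Q S \<and> Q' \<in> \<alpha> S)"

definition abs_run :: "('l, 'p::finite) ptba \<Rightarrow> ('p \<Rightarrow> int) \<Rightarrow> ('p \<Rightarrow> int) \<Rightarrow>
    (('l, 'p) sstate \<Rightarrow> ('l, 'p) sstate set) \<Rightarrow> (nat \<Rightarrow> ('l, 'p) sstate) \<Rightarrow> bool" where
  "abs_run A lb ub \<alpha> \<rho> = (\<rho> 0 \<in> abs_init A lb ub \<alpha> \<and> (\<forall>i. abs_step A \<alpha> (\<rho> i) (\<rho> (Suc i))))"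

definition accepting_run :: "('l, 'p::finite) ptba \<Rightarrow> ('p \<Rightarrow> int) \<Rightarrow> ('p \<Rightarrow> int) \<Rightarrow>
    (('l, 'p) sstate \<Rightarrow> ('l, 'p) sstate set) \<Rightarrow> (nat \<Rightarrow> ('l, 'p) sstate) \<Rightarrow> bool" where
  "accepting_run A lb ub \<alpha> \<rho> = (abs_run A lb ub \<alpha> \<rho> \<and> infinite {i. fst (\<rho> i) \<in> accs A})"

definition respects_val :: "'p pval \<Rightarrow> (nat \<Rightarrow> ('l, 'p) sstate) \<Rightarrow> bool" where
  "respects_val v \<rho> = (\<forall>i. v \<in> pset (\<rho> i))"

section \<open>CumulativeNDFS (nondeterministic big-step semantics)\<close>

text \<open>Global state (Found, Stack, Outer, Inner).  Successors are iterated in an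
  arbitrary order (any duplicate-free enumeration).  "return" in InnerDFS
  terminates the current InnerDFS invocation.\<close>

type_synonym ('n, 'v) gst = "'v set \<times> 'n set \<times> 'n set \<times> 'n set"

inductive outer_call :: "('n \<Rightarrow> 'n set) \<Rightarrow> ('n \<Rightarrow> bool) \<Rightarrow> ('n \<Rightarrow> 'v set) \<Rightarrow> ('n, 'v) gst \<Rightarrow> 'n \<Rightarrow> ('n, 'v) gst \<Rightarrow> bool"
  and outer_loop :: "('n \<Rightarrow> 'n set) \<Rightarrow> ('n \<Rightarrow> bool) \<Rightarrow> ('n \<Rightarrow> 'v set) \<Rightarrow> ('n, 'v) gst \<Rightarrow> 'n list \<Rightarrow> ('n, 'v) gst \<Rightarrow> bool"
  and inner_call :: "('n \<Rightarrow> 'n set) \<Rightarrow> ('n \<Rightarrow> bool) \<Rightarrow> ('n \<Rightarrow> 'v set) \<Rightarrow> ('n, 'v) gst \<Rightarrow> 'n \<Rightarrow> ('n, 'v) gst \<Rightarrow> bool"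
  and inner_loop :: "('n \<Rightarrow> 'n set) \<Rightarrow> ('n \<Rightarrow> bool) \<Rightarrow> ('n \<Rightarrow> 'v set) \<Rightarrow> ('n, 'v) gst \<Rightarrow> 'n list \<Rightarrow> ('n, 'v) gst \<Rightarrow> bool"
  for succ :: "'n \<Rightarrow> 'n set" and acc :: "'n \<Rightarrow> bool" and pc :: "'n \<Rightarrow> 'v set" where
  OC_inner: "distinct xs \<Longrightarrow> set xs = succ s \<Longrightarrow>
     outer_loop succ acc pc (F, insert s St, insert s Ou, Inn) xs (F1, St1, Ou1, Inn1) \<Longrightarrow>
     acc s \<Longrightarrow> \<not> pc s \<subseteq> F1 \<Longrightarrow>
     inner_call succ acc pc (F1, St1, Ou1, Inn1) s (F2, St2, Ou2, Inn2) \<Longrightarrow>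
     outer_call succ acc pc (F, St, Ou, Inn) s (F2, St2 - {s}, Ou2, Inn2)"
| OC_noinner: "distinct xs \<Longrightarrow> set xs = succ s \<Longrightarrow>
     outer_loop succ acc pc (F, insert s St, insert s Ou, Inn) xs (F1, St1, Ou1, Inn1) \<Longrightarrow>
     \<not> (acc s \<and> \<not> pc s \<subseteq> F1) \<Longrightarrow>
     outer_call succ acc pc (F, St, Ou, Inn) s (F1, St1 - {s}, Ou1, Inn1)"
| OL_nil: "outer_loop succ acc pc \<sigma> [] \<sigma>"
| OL_call: "t \<notin> Ou \<Longrightarrow> t \<notin> St \<Longrightarrow> \<not> pc t \<subseteq> F \<Longrightarrow>
     outer_call succ acc pc (F, St, Ou, Inn) t \<sigma>1 \<Longrightarrow> outer_loop succ acc pc \<sigma>1 ts \<sigma>2 \<Longrightarrow>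
     outer_loop succ acc pc (F, St, Ou, Inn) (t # ts) \<sigma>2"
| OL_skip: "\<not> (t \<notin> Ou \<and> t \<notin> St \<and> \<not> pc t \<subseteq> F) \<Longrightarrow>
     outer_loop succ acc pc (F, St, Ou, Inn) ts \<sigma>2 \<Longrightarrow> outer_loop succ acc pc (F, St, Ou, Inn) (t # ts) \<sigma>2"
| IC: "distinct xs \<Longrightarrow> set xs = succ s \<Longrightarrow>
     inner_loop succ acc pc (F, St, Ou, insert s Inn) xs \<sigma> \<Longrightarrow> inner_call succ acc pc (F, St, Ou, Inn) s \<sigma>"
| IL_nil: "inner_loop succ acc pc \<sigma> [] \<sigma>"
| IL_found: "t \<in> St \<Longrightarrow> inner_loop succ acc pc (F, St, Ou, Inn) (t # ts) (F \<union> pc t, St, Ou, Inn)"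
| IL_call: "t \<notin> St \<Longrightarrow> t \<notin> Inn \<Longrightarrow> \<not> pc t \<subseteq> F \<Longrightarrow>
     inner_call succ acc pc (F, St, Ou, Inn) t \<sigma>1 \<Longrightarrow> inner_loop succ acc pc \<sigma>1 ts \<sigma>2 \<Longrightarrow>
     inner_loop succ acc pc (F, St, Ou, Inn) (t # ts) \<sigma>2"
| IL_skip: "t \<notin> St \<Longrightarrow> \<not> (t \<notin> Inn \<and> \<not> pc t \<subseteq> F) \<Longrightarrow>
     inner_loop succ acc pc (F, St, Ou, Inn) ts \<sigma>2 \<Longrightarrow> inner_loop succ acc pc (F, St, Ou, Inn) (t # ts) \<sigma>2"

text \<open>Top level: Found, Stack, Outer, Inner := {}; OuterDFS is started on the
  initial states (in any order), which is OuterDFS on a virtual non-accepting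
  root whose successors are the initial states.\<close>
definition cndfs :: "'n set \<Rightarrow> ('n \<Rightarrow> 'n set) \<Rightarrow> ('n \<Rightarrow> bool) \<Rightarrow> ('n \<Rightarrow> 'v set) \<Rightarrow> 'v set \<Rightarrow> bool" where
  "cndfs inits succ acc pc Accepted = (\<exists>xs \<sigma>. distinct xs \<and> set xs = inits \<and>
      outer_loop succ acc pc ({}, {}, {}, {}) xs \<sigma> \<and> Accepted = fst \<sigma>)"

definition CumulativeNDFS_out :: "('l, 'p::finite) ptba \<Rightarrow> ('p \<Rightarrow> int) \<Rightarrow> ('p \<Rightarrow> int) \<Rightarrow>
    (('l, 'p) sstate \<Rightarrow> ('l, 'p) sstate set) \<Rightarrow> 'p pval set \<Rightarrow> bool" where
  "CumulativeNDFS_out A lb ub \<alpha> Accepted =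
     cndfs (abs_init A lb ub \<alpha>) (\<lambda>Q. {Q'. abs_step A \<alpha> Q Q'}) (\<lambda>Q. fst Q \<in> accs A) pset Accepted"

end

theory Submission
  imports Defs
begin

definition fnd :: "('n, 'v) gst \<Rightarrow> 'v set" where "fnd \<sigma> = fst \<sigma>"
definition stk :: "('n, 'v) gst \<Rightarrow> 'n set" where "stk \<sigma> = fst (snd \<sigma>)"
definition out :: "('n, 'v) gst \<Rightarrow> 'n set" where "out \<sigma> = fst (snd (snd \<sigma>))"
definition inn :: "('n, 'v) gst \<Rightarrow> 'n set" where "inn \<sigma> = snd (snd (snd \<sigma>))"
lemmas acc_defs[simp] = fnd_def stk_def out_def inn_def

lemma pres:
  "outer_call succ acc pc \<sigma> x \<sigma>' \<Longrightarrow> fnd \<sigma> \<subseteq> fnd \<sigma>' \<and> inn \<sigma> \<subseteq> inn \<sigma>' \<and> out \<sigma> \<subseteq> out \<sigma>'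
     \<and> (x \<notin> stk \<sigma> \<longrightarrow> stk \<sigma>' = stk \<sigma>) \<and> x \<in> out \<sigma>'"
  "outer_loop succ acc pc \<sigma> xs \<sigma>' \<Longrightarrow> fnd \<sigma> \<subseteq> fnd \<sigma>' \<and> inn \<sigma> \<subseteq> inn \<sigma>' \<and> out \<sigma> \<subseteq> out \<sigma>'
     \<and> stk \<sigma>' = stk \<sigma>"
  "inner_call succ acc pc \<sigma> x \<sigma>' \<Longrightarrow> fnd \<sigma> \<subseteq> fnd \<sigma>' \<and> insert x (inn \<sigma>) \<subseteq> inn \<sigma>' \<and> out \<sigma>' = out \<sigma>
     \<and> stk \<sigma>' = stk \<sigma>"
  "inner_loop succ acc pc \<sigma> xs \<sigma>' \<Longrightarrow> fnd \<sigma> \<subseteq> fnd \<sigma>' \<and> inn \<sigma> \<subseteq> inn \<sigma>' \<and> out \<sigma>' = out \<sigma>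
     \<and> stk \<sigma>' = stk \<sigma>"
proof (induction rule: outer_call_outer_loop_inner_call_inner_loop.inducts)
qed auto

definition egr :: "('n \<Rightarrow> 'n set) \<Rightarrow> ('n \<times> 'n) set" where
  "egr succ = {(x, y). y \<in> succ x}"
definition reach :: "'n set \<Rightarrow> ('n \<Rightarrow> 'n set) \<Rightarrow> 'n set" where
  "reach inits succ = {y. \<exists>x\<in>inits. (x, y) \<in> (egr succ)\<^sup>*}"

locale ndfs =
  fixes inits :: "'n set" and succ :: "'n \<Rightarrow> 'n set" and acc :: "'n \<Rightarrow> bool" and pc :: "'n \<Rightarrow> 'v set"
  assumes finR: "finite (reach inits succ)"
    and monoR: "\<And>x y. x \<in> reach inits succ \<Longrightarrow> y \<in> succ x \<Longrightarrow> pc y \<subseteq> pc x"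
begin

abbreviation "E \<equiv> egr succ"
abbreviation "RR \<equiv> reach inits succ"

lemma succ_RR: "x \<in> RR \<Longrightarrow> y \<in> succ x \<Longrightarrow> y \<in> RR"
  unfolding reach_def egr_def by (auto intro: rtrancl_into_rtrancl)

lemma inits_RR: "x \<in> inits \<Longrightarrow> x \<in> RR"
  unfolding reach_def by auto

lemma path_RR: "(x, y) \<in> E\<^sup>* \<Longrightarrow> x \<in> RR \<Longrightarrow> y \<in> RR \<and> pc y \<subseteq> pc x"
  by (induction rule: rtrancl_induct) (auto simp: egr_def dest: succ_RR monoR)

lemma fin_succ: "x \<in> RR \<Longrightarrow> finite (succ x)"
  using finR succ_RR by (meson finite_subset subsetI)

lemma inner_ex:
  "card (RR - inn \<sigma>) \<le> n \<Longrightarrow> set xs \<subseteq> RR \<Longrightarrow> \<exists>\<sigma>'. inner_loop succ acc pc \<sigma> xs \<sigma>'"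
proof (induction n arbitrary: \<sigma> xs rule: less_induct)
  case (less n)
  show ?case using less.prems
  proof (induction xs arbitrary: \<sigma>)
    case Nil
    then show ?case using IL_nil by blast
  next
    case (Cons t ts)
    obtain F St Ou Inn where \<sigma>: "\<sigma> = (F, St, Ou, Inn)" by (cases \<sigma>) auto
    have tR: "t \<in> RR" using Cons.prems by auto
    show ?case
    proof (cases "t \<in> St")
      case True
      then show ?thesis unfolding \<sigma> by (blast intro: IL_found)
    next
      case nst: False
      show ?thesis
      proof (cases "t \<notin> Inn \<and> \<not> pc t \<subseteq> F")
        case True
        obtain ys where ys: "set ys = succ t" "distinct ys"
          using finite_distinct_list[OF fin_succ[OF tR]] by blast
        have lt: "card (RR - insert t Inn) < card (RR - Inn)"
          using True tR finR by (intro psubset_card_mono) auto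
        have "card (RR - inn (F, St, Ou, insert t Inn)) < n"
          using lt Cons.prems unfolding \<sigma> by simp
        moreover have "set ys \<subseteq> RR" using ys succ_RR tR by blast
        ultimately obtain \<sigma>1 where l1: "inner_loop succ acc pc (F, St, Ou, insert t Inn) ys \<sigma>1"
          using less.IH by blast
        have c1: "inner_call succ acc pc (F, St, Ou, Inn) t \<sigma>1"
          using IC[OF ys(2) ys(1) l1] .
        have "inn \<sigma> \<subseteq> inn \<sigma>1" using pres(3)[OF c1] \<sigma> by auto
        hence "card (RR - inn \<sigma>1) \<le> card (RR - inn \<sigma>)"
          using finR by (intro card_mono) auto
        hence c: "card (RR - inn \<sigma>1) \<le> n" using Cons.prems by simp
        have ts: "set ts \<subseteq> RR" using Cons.prems by simp
        then obtain \<sigma>2 where "inner_loop succ acc pc \<sigma>1 ts \<sigma>2"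
          using Cons.IH[OF c ts] by (elim exE)
        then have "inner_loop succ acc pc (F, St, Ou, Inn) (t # ts) \<sigma>2"
          using True by (intro IL_call[OF nst _ _ c1]) auto
        then show ?thesis unfolding \<sigma> by (rule exI)
      next
        case False
        have ts: "set ts \<subseteq> RR" using Cons.prems by simp
        obtain \<sigma>2 where "inner_loop succ acc pc \<sigma> ts \<sigma>2"
          using Cons.IH[OF Cons.prems(1) ts] by (elim exE)
        then have "inner_loop succ acc pc (F, St, Ou, Inn) (t # ts) \<sigma>2"
          using \<sigma> by (intro IL_skip[where pc=pc and t=t, OF nst False]) auto
        then show ?thesis unfolding \<sigma> by (rule exI)
      qed
    qed
  qed
qed

lemma inner_call_ex: "t \<in> RR \<Longrightarrow> \<exists>\<sigma>'. inner_call succ acc pc \<sigma> t \<sigma>'"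
proof -
  assume tR: "t \<in> RR"
  obtain F St Ou Inn where \<sigma>: "\<sigma> = (F, St, Ou, Inn)" by (cases \<sigma>) auto
  obtain ys where ys: "set ys = succ t" "distinct ys"
    using finite_distinct_list[OF fin_succ[OF tR]] by blast
  have "set ys \<subseteq> RR" using ys succ_RR tR by blast
  then obtain \<sigma>1 where l1: "inner_loop succ acc pc (F, St, Ou, insert t Inn) ys \<sigma>1"
    using inner_ex by blast
  show ?thesis unfolding \<sigma> using IC[OF ys(2) ys(1) l1] by (rule exI)
qed

lemma outer_ex:
  "card (RR - out \<sigma>) \<le> n \<Longrightarrow> set xs \<subseteq> RR \<Longrightarrow> \<exists>\<sigma>'. outer_loop succ acc pc \<sigma> xs \<sigma>'"
proof (induction n arbitrary: \<sigma> xs rule: less_induct)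
  case (less n)
  show ?case using less.prems
  proof (induction xs arbitrary: \<sigma>)
    case Nil
    then show ?case using OL_nil by blast
  next
    case (Cons t ts)
    obtain F St Ou Inn where \<sigma>: "\<sigma> = (F, St, Ou, Inn)" by (cases \<sigma>) auto
    have tR: "t \<in> RR" using Cons.prems by auto
    show ?case
    proof (cases "t \<notin> Ou \<and> t \<notin> St \<and> \<not> pc t \<subseteq> F")
      case True
      obtain ys where ys: "set ys = succ t" "distinct ys"
        using finite_distinct_list[OF fin_succ[OF tR]] by blast
      have lt: "card (RR - insert t Ou) < card (RR - Ou)"
        using True tR finR by (intro psubset_card_mono) auto
      have "card (RR - out (F, insert t St, insert t Ou, Inn)) < n"
        using lt Cons.prems unfolding \<sigma> by simp
      moreover have "set ys \<subseteq> RR" using ys succ_RR tR by blast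
      ultimately obtain \<sigma>1 where l1: "outer_loop succ acc pc (F, insert t St, insert t Ou, Inn) ys \<sigma>1"
        using less.IH by blast
      obtain F1 St1 Ou1 Inn1 where \<sigma>1: "\<sigma>1 = (F1, St1, Ou1, Inn1)" by (cases \<sigma>1) auto
      obtain c1 where c1: "outer_call succ acc pc (F, St, Ou, Inn) t c1"
      proof (cases "acc t \<and> \<not> pc t \<subseteq> F1")
        case True
        then obtain \<sigma>2 where i2: "inner_call succ acc pc \<sigma>1 t \<sigma>2" using inner_call_ex tR by blast
        obtain F2 St2 Ou2 Inn2 where \<sigma>2: "\<sigma>2 = (F2, St2, Ou2, Inn2)" by (cases \<sigma>2) auto
        show ?thesis using OC_inner[OF ys(2) ys(1) l1[unfolded \<sigma>1]] True i2[unfolded \<sigma>1 \<sigma>2] that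
          by blast
      next
        case False
        show ?thesis using OC_noinner[OF ys(2) ys(1) l1[unfolded \<sigma>1] False] that by blast
      qed
      have "out \<sigma> \<subseteq> out c1" using pres(1)[OF c1] \<sigma> by auto
      hence "card (RR - out c1) \<le> card (RR - out \<sigma>)"
        using finR by (intro card_mono) auto
      hence c: "card (RR - out c1) \<le> n" using Cons.prems by simp
      have ts: "set ts \<subseteq> RR" using Cons.prems by simp
      then obtain \<sigma>2 where "outer_loop succ acc pc c1 ts \<sigma>2"
        using Cons.IH[OF c ts] by (elim exE)
      then have "outer_loop succ acc pc (F, St, Ou, Inn) (t # ts) \<sigma>2"
        using True by (intro OL_call[OF _ _ _ c1]) auto
      then show ?thesis unfolding \<sigma> by (rule exI)
    next
      case False
      have ts: "set ts \<subseteq> RR" using Cons.prems by simp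
        obtain \<sigma>2 where "outer_loop succ acc pc \<sigma> ts \<sigma>2"
        using Cons.IH[OF Cons.prems(1) ts] by (elim exE)
      then have "outer_loop succ acc pc (F, St, Ou, Inn) (t # ts) \<sigma>2"
        using False \<sigma> by (intro OL_skip[where pc=pc]) auto
      then show ?thesis unfolding \<sigma> by (rule exI)
    qed
  qed
qed

lemma cndfs_ex: "finite inits \<Longrightarrow> \<exists>Acc. cndfs inits succ acc pc Acc"
proof -
  assume "finite inits"
  then obtain xs where xs: "set xs = inits" "distinct xs" using finite_distinct_list by blast
  have "set xs \<subseteq> RR" using xs inits_RR by blast
  then obtain \<sigma> where "outer_loop succ acc pc ({}, {}, {}, {}) xs \<sigma>"
    using outer_ex[of "({}, {}, {}, {})"] by blast
  then show ?thesis unfolding cndfs_def using xs by blast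
qed


end

context ndfs begin
lemma egr_iff[simp]: "(x, y) \<in> E \<longleftrightarrow> y \<in> succ x" by (simp add: egr_def)

definition "Good = {v. \<exists>a\<in>RR. acc a \<and> (a, a) \<in> E\<^sup>+ \<and> v \<in> pc a}"

lemma sound:
  "outer_call succ acc pc \<sigma> x \<sigma>' \<Longrightarrow> x \<in> RR \<Longrightarrow> (\<forall>t\<in>stk \<sigma>. (t, x) \<in> E\<^sup>*) \<Longrightarrow> fnd \<sigma>' \<subseteq> fnd \<sigma> \<union> Good"
  "outer_loop succ acc pc \<sigma> xs \<sigma>' \<Longrightarrow> (\<forall>x\<in>set xs. x \<in> RR \<and> (\<forall>t\<in>stk \<sigma>. (t, x) \<in> E\<^sup>*)) \<Longrightarrow> fnd \<sigma>' \<subseteq> fnd \<sigma> \<union> Good"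
  "inner_call succ acc pc \<sigma> x \<sigma>' \<Longrightarrow> \<forall>z. z \<in> RR \<longrightarrow> acc z \<longrightarrow> (z, x) \<in> E\<^sup>* \<longrightarrow> (\<forall>t\<in>stk \<sigma>. (t, z) \<in> E\<^sup>*) \<longrightarrow> fnd \<sigma>' \<subseteq> fnd \<sigma> \<union> Good"
  "inner_loop succ acc pc \<sigma> xs \<sigma>' \<Longrightarrow> \<forall>z. z \<in> RR \<longrightarrow> acc z \<longrightarrow> (\<forall>t\<in>set xs. (z, t) \<in> E\<^sup>+) \<longrightarrow> (\<forall>t\<in>stk \<sigma>. (t, z) \<in> E\<^sup>*) \<longrightarrow> fnd \<sigma>' \<subseteq> fnd \<sigma> \<union> Good"
proof (induction rule: outer_call_outer_loop_inner_call_inner_loop.inducts)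
  case (OC_inner xs s F St Ou Inn F1 St1 Ou1 Inn1 F2 St2 Ou2 Inn2)
  have St1: "St1 = insert s St" using pres(2)[OF OC_inner(3)] by simp
  have "\<forall>x\<in>set xs. x \<in> RR \<and> (\<forall>t\<in>stk (F, insert s St, insert s Ou, Inn). (t, x) \<in> E\<^sup>*)"
    using OC_inner.prems OC_inner(2) succ_RR by (auto intro: rtrancl_into_rtrancl)
  then have "F1 \<subseteq> F \<union> Good"
    using OC_inner(4) by auto
  moreover have "F2 \<subseteq> F1 \<union> Good"
    using OC_inner(8)[rule_format, of s] OC_inner.prems OC_inner(5) St1 by auto
  ultimately show ?case by auto
next
  case (OC_noinner xs s F St Ou Inn F1 St1 Ou1 Inn1)
  have "\<forall>x\<in>set xs. x \<in> RR \<and> (\<forall>t\<in>stk (F, insert s St, insert s Ou, Inn). (t, x) \<in> E\<^sup>*)"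
    using OC_noinner.prems OC_noinner(2) succ_RR by (auto intro: rtrancl_into_rtrancl)
  then have "F1 \<subseteq> F \<union> Good"
    using OC_noinner(4) by auto
  then show ?case by auto
next
  case (OL_nil \<sigma>)
  then show ?case by simp
next
  case (OL_call t Ou St F Inn \<sigma>1 ts \<sigma>2)
  have "stk \<sigma>1 = St" using pres(1)[OF OL_call(4)] OL_call(2) by simp
  then have "fnd \<sigma>2 \<subseteq> fnd \<sigma>1 \<union> Good" using OL_call(7) OL_call.prems by auto
  moreover have "fnd \<sigma>1 \<subseteq> F \<union> Good" using OL_call(5) OL_call.prems by auto
  ultimately show ?case by auto
next
  case (OL_skip t Ou St F Inn ts \<sigma>2)
  then show ?case by simp
next
  case (IC xs s F St Ou Inn \<sigma>)
  show ?case proof (intro allI impI)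
  fix z assume IC_prems: "z \<in> RR" "acc z" "(z, s) \<in> E\<^sup>*" "\<forall>t\<in>stk (F, St, Ou, Inn). (t, z) \<in> E\<^sup>*"
  have "\<forall>t\<in>set xs. (z, t) \<in> E\<^sup>+" using IC_prems(3) IC(2)
    by (auto intro: rtrancl_into_trancl1)
  then show "fnd \<sigma> \<subseteq> fnd (F, St, Ou, Inn) \<union> Good" using IC(4) IC_prems by auto
  qed
next
  case (IL_nil \<sigma>)
  then show ?case by simp
next
  case (IL_found t St F Ou Inn ts)
  show ?case proof (intro allI impI)
  fix z assume IL_prems: "z \<in> RR" "acc z" "\<forall>t'\<in>set (t # ts). (z, t') \<in> E\<^sup>+" "\<forall>t\<in>stk (F, St, Ou, Inn). (t, z) \<in> E\<^sup>*"
  have zt: "(z, t) \<in> E\<^sup>+" using IL_prems by auto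
  have tz: "(t, z) \<in> E\<^sup>*" using IL_prems IL_found(1) by auto
  have "pc t \<subseteq> pc z" using path_RR[OF trancl_into_rtrancl[OF zt] IL_prems(1)] by simp
  moreover have "(z, z) \<in> E\<^sup>+" using zt tz by auto
  ultimately have "pc t \<subseteq> Good" using IL_prems unfolding Good_def by auto
  then show "fnd (F \<union> pc t, St, Ou, Inn) \<subseteq> fnd (F, St, Ou, Inn) \<union> Good" by auto
  qed
next
  case (IL_call t St Inn F Ou \<sigma>1 ts \<sigma>2)
  have st: "stk \<sigma>1 = St" using pres(3)[OF IL_call(4)] by simp
  show ?case proof (intro allI impI)
    fix z assume P: "z \<in> RR" "acc z" "\<forall>t'\<in>set (t # ts). (z, t') \<in> E\<^sup>+" "\<forall>t\<in>stk (F, St, Ou, Inn). (t, z) \<in> E\<^sup>*"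
    have "fnd \<sigma>2 \<subseteq> fnd \<sigma>1 \<union> Good" using IL_call(7) P st by auto
    moreover have "fnd \<sigma>1 \<subseteq> F \<union> Good" using IL_call(5) P by (auto intro: trancl_into_rtrancl)
    ultimately show "fnd \<sigma>2 \<subseteq> fnd (F, St, Ou, Inn) \<union> Good" by auto
  qed
next
  case (IL_skip t St Inn F Ou ts \<sigma>2)
  show ?case proof (intro allI impI)
    fix z assume P: "z \<in> RR" "acc z" "\<forall>t'\<in>set (t # ts). (z, t') \<in> E\<^sup>+" "\<forall>t\<in>stk (F, St, Ou, Inn). (t, z) \<in> E\<^sup>*"
    have P3: "\<forall>t'\<in>set ts. (z, t') \<in> E\<^sup>+" using P(3) by simp
    show "fnd \<sigma>2 \<subseteq> fnd (F, St, Ou, Inn) \<union> Good"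
      apply (rule IL_skip(4)[rule_format])
      using P P3 by (simp_all, blast, blast)
  qed
qed

end

locale ndfs_v = ndfs inits succ acc pc for inits :: "'n set" and succ acc and pc :: "'n \<Rightarrow> 'v set" + fixes v :: 'v
begin

definition "V = {x \<in> RR. v \<in> pc x}"

lemma V_pred: "x \<in> RR \<Longrightarrow> y \<in> succ x \<Longrightarrow> y \<in> V \<Longrightarrow> x \<in> V"
  unfolding V_def using monoR by blast

lemma V_path: "(x, y) \<in> E\<^sup>* \<Longrightarrow> x \<in> RR \<Longrightarrow> y \<in> V \<Longrightarrow> x \<in> V"
  unfolding V_def using path_RR by blast

lemma V_RR: "x \<in> V \<Longrightarrow> x \<in> RR" unfolding V_def by simp

lemma cl_path:
  assumes cl: "\<forall>y\<in>I \<inter> V. \<forall>u\<in>succ y. u \<in> V \<longrightarrow> u \<in> I \<and> u \<notin> S"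
    and y: "y \<in> I \<inter> V" and p: "(y, w) \<in> E\<^sup>+"
  shows "w \<in> V \<longrightarrow> w \<in> I \<and> w \<notin> S"
  using p
proof (induction rule: trancl_induct)
  case (base w)
  then show ?case using cl y by simp
next
  case (step a w)
  show ?case
  proof
    assume wV: "w \<in> V"
    have aR: "a \<in> RR" using path_RR[OF trancl_into_rtrancl[OF step.hyps(1)]] y V_RR by blast
    have "a \<in> V" using V_pred[OF aR _ wV] step.hyps(2) by simp
    then have "a \<in> I" using step.IH by blast
    then show "w \<in> I \<and> w \<notin> S" using cl \<open>a \<in> V\<close> wV step.hyps(2) by simp
  qed
qed

lemma B_path:
  assumes B: "\<forall>x\<in>Ou. x \<in> V \<longrightarrow> succ x \<inter> V \<subseteq> Ou" and x: "x \<in> Ou" "x \<in> V"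
    and p: "(x, w) \<in> E\<^sup>*"
  shows "w \<in> V \<longrightarrow> w \<in> Ou"
  using p
proof (induction rule: rtrancl_induct)
  case base
  then show ?case using x by simp
next
  case (step a w)
  show ?case
  proof
    assume wV: "w \<in> V"
    have aR: "a \<in> RR" using path_RR[OF step.hyps(1)] x V_RR by blast
    have "a \<in> V" using V_pred[OF aR _ wV] step.hyps(2) by simp
    then have "a \<in> Ou" using step.IH by blast
    then show "w \<in> Ou" using B \<open>a \<in> V\<close> wV step.hyps(2) by auto
  qed
qed

definition invB :: "'n set \<Rightarrow> 'n set \<Rightarrow> bool" where
  "invB Ou St = (\<forall>x\<in>Ou - St. x \<in> V \<longrightarrow> succ x \<inter> V \<subseteq> Ou)"
definition invA :: "'n set \<Rightarrow> 'n set \<Rightarrow> 'n set \<Rightarrow> bool" where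
  "invA Ou St Inn = (\<forall>x\<in>Ou - St. x \<in> V \<longrightarrow> acc x \<longrightarrow> x \<in> Inn)"

lemma invA_mono: "invA Ou St Inn \<Longrightarrow> Inn \<subseteq> Inn' \<Longrightarrow> invA Ou St Inn'"
  unfolding invA_def by blast

definition ICP :: "'n \<Rightarrow> ('n, 'v) gst \<Rightarrow> 'n \<Rightarrow> ('n, 'v) gst \<Rightarrow> bool" where
  "ICP z \<sigma> x \<sigma>' = ((inn \<sigma>' - inn \<sigma> \<subseteq> {y. (z, y) \<in> E\<^sup>*} \<and> inn \<sigma>' - inn \<sigma> \<subseteq> insert x (- stk \<sigma>)) \<and>
     (z \<in> V \<longrightarrow> v \<notin> fnd \<sigma>' \<longrightarrow> invB (out \<sigma>) (stk \<sigma>) \<longrightarrow> invA (out \<sigma>) (stk \<sigma>) (inn \<sigma>) \<longrightarrow>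
       (x \<in> V \<longrightarrow> x \<in> out \<sigma> \<and> (x \<in> stk \<sigma> \<longrightarrow> succ x \<inter> V \<subseteq> out \<sigma>)) \<longrightarrow>
       (\<forall>y\<in>insert x (inn \<sigma>' - inn \<sigma>). \<forall>t\<in>succ y. t \<notin> stk \<sigma> \<and> (t \<in> V \<longrightarrow> t \<in> inn \<sigma>')) \<and>
       (\<forall>y\<in>inn \<sigma>' - inn \<sigma>. y \<in> V \<longrightarrow> y \<in> out \<sigma> \<and> (y \<noteq> x \<longrightarrow> \<not> acc y))))"

definition ILP :: "'n \<Rightarrow> ('n, 'v) gst \<Rightarrow> 'n list \<Rightarrow> ('n, 'v) gst \<Rightarrow> bool" where
  "ILP z \<sigma> xs \<sigma>' = ((inn \<sigma>' - inn \<sigma> \<subseteq> {y. (z, y) \<in> E\<^sup>*} \<and> inn \<sigma>' - inn \<sigma> \<subseteq> - stk \<sigma>) \<and>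
     (z \<in> V \<longrightarrow> v \<notin> fnd \<sigma>' \<longrightarrow> invB (out \<sigma>) (stk \<sigma>) \<longrightarrow> invA (out \<sigma>) (stk \<sigma>) (inn \<sigma>) \<longrightarrow>
       (\<forall>t\<in>set xs. t \<in> V \<longrightarrow> t \<in> out \<sigma>) \<longrightarrow>
       (\<forall>t\<in>set xs. t \<notin> stk \<sigma> \<and> (t \<in> V \<longrightarrow> t \<in> inn \<sigma>')) \<and>
       (\<forall>y\<in>inn \<sigma>' - inn \<sigma>. (\<forall>t\<in>succ y. t \<notin> stk \<sigma> \<and> (t \<in> V \<longrightarrow> t \<in> inn \<sigma>')) \<and>
          (y \<in> V \<longrightarrow> y \<in> out \<sigma> \<and> \<not> acc y))))"

lemma inner_compl:
  "outer_call succ acc pc \<sigma> x \<sigma>' \<Longrightarrow> True"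
  "outer_loop succ acc pc \<sigma> xs \<sigma>' \<Longrightarrow> True"
  "inner_call succ acc pc \<sigma> x \<sigma>' \<Longrightarrow> \<forall>z. z \<in> RR \<longrightarrow> (z, x) \<in> E\<^sup>* \<longrightarrow> (\<forall>t\<in>stk \<sigma>. t \<in> RR \<and> (t, z) \<in> E\<^sup>*) \<longrightarrow> ICP z \<sigma> x \<sigma>'"
  "inner_loop succ acc pc \<sigma> xs \<sigma>' \<Longrightarrow> \<forall>z. z \<in> RR \<longrightarrow> (\<forall>t\<in>set xs. (z, t) \<in> E\<^sup>*) \<longrightarrow> (\<forall>t\<in>stk \<sigma>. t \<in> RR \<and> (t, z) \<in> E\<^sup>*) \<longrightarrow> ILP z \<sigma> xs \<sigma>'"
proof (induction rule: outer_call_outer_loop_inner_call_inner_loop.inducts)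
  case (IC xs x F St Ou Inn \<sigma>')
  show ?case
  proof (intro allI impI)
    fix z assume zR: "z \<in> RR" and zx: "(z, x) \<in> E\<^sup>*" and sh: "\<forall>t\<in>stk (F, St, Ou, Inn). t \<in> RR \<and> (t, z) \<in> E\<^sup>*"
    have xs: "\<forall>t\<in>set xs. (z, t) \<in> E\<^sup>*" using IC(2) zx by (auto intro: rtrancl_into_rtrancl)
    have L: "ILP z (F, St, Ou, insert x Inn) xs \<sigma>'"
      using IC(4) zR xs sh by simp
    have xR: "x \<in> RR" using path_RR[OF zx zR] by simp
    show "ICP z (F, St, Ou, Inn) x \<sigma>'"
      unfolding ICP_def
    proof (intro conjI impI)
      have Lg: "inn \<sigma>' - insert x Inn \<subseteq> {y. (z, y) \<in> E\<^sup>*}" "inn \<sigma>' - insert x Inn \<subseteq> - St"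
        using L[unfolded ILP_def, THEN conjunct1] by simp_all
      show "inn \<sigma>' - inn (F, St, Ou, Inn) \<subseteq> {y. (z, y) \<in> E\<^sup>*}"
        using Lg zx by (simp only: acc_defs prod.sel) blast
      show "inn \<sigma>' - inn (F, St, Ou, Inn) \<subseteq> insert x (- stk (F, St, Ou, Inn))"
        using Lg by (simp only: acc_defs prod.sel) blast
    next
      assume zV: "z \<in> V" and vF: "v \<notin> fnd \<sigma>'" and B: "invB (out (F, St, Ou, Inn)) (stk (F, St, Ou, Inn))"
        and A: "invA (out (F, St, Ou, Inn)) (stk (F, St, Ou, Inn)) (inn (F, St, Ou, Inn))"
        and px: "x \<in> V \<longrightarrow> x \<in> out (F, St, Ou, Inn) \<and> (x \<in> stk (F, St, Ou, Inn) \<longrightarrow> succ x \<inter> V \<subseteq> out (F, St, Ou, Inn))"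
      have A': "invA Ou St (insert x Inn)" by (rule invA_mono[of Ou St Inn]) (use A in auto)
      have pre: "\<forall>t\<in>set xs. t \<in> V \<longrightarrow> t \<in> Ou"
      proof
        fix t assume "t \<in> set xs"
        then have ts: "t \<in> succ x" using IC(2) by simp
        show "t \<in> V \<longrightarrow> t \<in> Ou"
        proof
          assume tV: "t \<in> V"
          have xV: "x \<in> V" using V_pred[OF xR ts tV] .
          show "t \<in> Ou"
          proof (cases "x \<in> St")
            case True then show ?thesis using px xV ts tV by auto
          next
            case False then show ?thesis using px xV ts tV B unfolding invB_def by auto
          qed
        qed
      qed
      have B0: "invB (out (F, St, Ou, insert x Inn)) (stk (F, St, Ou, insert x Inn))" using B by simp
      have A0: "invA (out (F, St, Ou, insert x Inn)) (stk (F, St, Ou, insert x Inn)) (inn (F, St, Ou, insert x Inn))"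
        using A' by simp
      have P0: "\<forall>t\<in>set xs. t \<in> V \<longrightarrow> t \<in> out (F, St, Ou, insert x Inn)" using pre by simp
      note L2' = mp[OF mp[OF mp[OF mp[OF mp[OF L[unfolded ILP_def, THEN conjunct2] zV] vF] B0] A0] P0]
      have L2: "(\<forall>t\<in>set xs. t \<notin> St \<and> (t \<in> V \<longrightarrow> t \<in> inn \<sigma>')) \<and>
         (\<forall>y\<in>inn \<sigma>' - insert x Inn. (\<forall>t\<in>succ y. t \<notin> St \<and> (t \<in> V \<longrightarrow> t \<in> inn \<sigma>')) \<and>
          (y \<in> V \<longrightarrow> y \<in> Ou \<and> \<not> acc y))"
        using L2' by (simp only: acc_defs prod.sel)
      show "\<forall>y\<in>insert x (inn \<sigma>' - inn (F, St, Ou, Inn)). \<forall>t\<in>succ y. t \<notin> stk (F, St, Ou, Inn) \<and> (t \<in> V \<longrightarrow> t \<in> inn \<sigma>')"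
        using L2 IC(2) by (simp only: acc_defs prod.sel) blast
      show "\<forall>y\<in>inn \<sigma>' - inn (F, St, Ou, Inn). y \<in> V \<longrightarrow> y \<in> out (F, St, Ou, Inn) \<and> (y \<noteq> x \<longrightarrow> \<not> acc y)"
        using L2 px by (simp only: acc_defs prod.sel) blast
    qed
  qed
next
  case (IL_nil \<sigma>)
  then show ?case unfolding ILP_def by simp
next
  case (IL_found t St F Ou Inn ts)
  show ?case
  proof (intro allI impI)
    fix z assume zR: "z \<in> RR" and xs: "\<forall>t'\<in>set (t # ts). (z, t') \<in> E\<^sup>*"
      and sh: "\<forall>t\<in>stk (F, St, Ou, Inn). t \<in> RR \<and> (t, z) \<in> E\<^sup>*"
    have tz: "t \<in> RR" "(t, z) \<in> E\<^sup>*" using sh IL_found(1) by auto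
    have "pc z \<subseteq> pc t" using path_RR[OF tz(2) tz(1)] by simp
    then show "ILP z (F, St, Ou, Inn) (t # ts) (F \<union> pc t, St, Ou, Inn)"
      unfolding ILP_def V_def by auto
  qed
next
  case (IL_call t St Inn F Ou \<sigma>1 ts \<sigma>2)
  have p1: "F \<subseteq> fnd \<sigma>1" "insert t Inn \<subseteq> inn \<sigma>1" "out \<sigma>1 = Ou" "stk \<sigma>1 = St"
    using pres(3)[OF IL_call(4)] by auto
  have p2: "fnd \<sigma>1 \<subseteq> fnd \<sigma>2" "inn \<sigma>1 \<subseteq> inn \<sigma>2" "out \<sigma>2 = out \<sigma>1" "stk \<sigma>2 = stk \<sigma>1"
    using pres(4)[OF IL_call(6)] by auto
  show ?case
  proof (intro allI impI)
    fix z assume zR: "z \<in> RR" and xs: "\<forall>t'\<in>set (t # ts). (z, t') \<in> E\<^sup>*"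
      and sh: "\<forall>t\<in>stk (F, St, Ou, Inn). t \<in> RR \<and> (t, z) \<in> E\<^sup>*"
    have C: "ICP z (F, St, Ou, Inn) t \<sigma>1" using IL_call(5) zR xs sh by simp
    have L: "ILP z \<sigma>1 ts \<sigma>2" using IL_call(7) zR xs sh p1 by simp
    show "ILP z (F, St, Ou, Inn) (t # ts) \<sigma>2"
      unfolding ILP_def
    proof (intro conjI impI)
      have Cg: "inn \<sigma>1 - Inn \<subseteq> {y. (z, y) \<in> E\<^sup>*}" "inn \<sigma>1 - Inn \<subseteq> insert t (- St)"
        using C[unfolded ICP_def, THEN conjunct1] by simp_all
      have Lg: "inn \<sigma>2 - inn \<sigma>1 \<subseteq> {y. (z, y) \<in> E\<^sup>*}" "inn \<sigma>2 - inn \<sigma>1 \<subseteq> - St"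
        using L[unfolded ILP_def, THEN conjunct1] p1 by simp_all
      show "inn \<sigma>2 - inn (F, St, Ou, Inn) \<subseteq> {y. (z, y) \<in> E\<^sup>*}"
        using Cg Lg by (simp only: acc_defs prod.sel) blast
      show "inn \<sigma>2 - inn (F, St, Ou, Inn) \<subseteq> - stk (F, St, Ou, Inn)"
        using Cg Lg IL_call(1) by (simp only: acc_defs prod.sel) blast
    next
      assume zV: "z \<in> V" and vF: "v \<notin> fnd \<sigma>2" and B: "invB (out (F, St, Ou, Inn)) (stk (F, St, Ou, Inn))"
        and A: "invA (out (F, St, Ou, Inn)) (stk (F, St, Ou, Inn)) (inn (F, St, Ou, Inn))"
        and pre: "\<forall>t'\<in>set (t # ts). t' \<in> V \<longrightarrow> t' \<in> out (F, St, Ou, Inn)"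
      have vF1: "v \<notin> fnd \<sigma>1" using vF p2 by auto
      have B1: "invB (out (F, St, Ou, Inn)) (stk (F, St, Ou, Inn))" using B .
      have X1: "t \<in> V \<longrightarrow> t \<in> out (F, St, Ou, Inn) \<and> (t \<in> stk (F, St, Ou, Inn) \<longrightarrow> succ t \<inter> V \<subseteq> out (F, St, Ou, Inn))"
        using pre IL_call(1) by simp
      note C2' = mp[OF mp[OF mp[OF mp[OF mp[OF C[unfolded ICP_def, THEN conjunct2] zV] vF1] B1] A] X1]
      have C2: "(\<forall>y\<in>insert t (inn \<sigma>1 - Inn). \<forall>u\<in>succ y. u \<notin> St \<and> (u \<in> V \<longrightarrow> u \<in> inn \<sigma>1)) \<and>
         (\<forall>y\<in>inn \<sigma>1 - Inn. y \<in> V \<longrightarrow> y \<in> Ou \<and> (y \<noteq> t \<longrightarrow> \<not> acc y))"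
        using C2' by (simp only: acc_defs prod.sel)
      have A1: "invA Ou St (inn \<sigma>1)" by (rule invA_mono[of Ou St Inn]) (use A p1 in auto)
      have B2: "invB (out \<sigma>1) (stk \<sigma>1)" using B p1 by simp
      have A2: "invA (out \<sigma>1) (stk \<sigma>1) (inn \<sigma>1)" using A1 p1 by simp
      have P2: "\<forall>u\<in>set ts. u \<in> V \<longrightarrow> u \<in> out \<sigma>1" using pre p1 by simp
      note L2' = mp[OF mp[OF mp[OF mp[OF mp[OF L[unfolded ILP_def, THEN conjunct2] zV] vF] B2] A2] P2]
      have L2: "(\<forall>u\<in>set ts. u \<notin> St \<and> (u \<in> V \<longrightarrow> u \<in> inn \<sigma>2)) \<and>
         (\<forall>y\<in>inn \<sigma>2 - inn \<sigma>1. (\<forall>u\<in>succ y. u \<notin> St \<and> (u \<in> V \<longrightarrow> u \<in> inn \<sigma>2)) \<and>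
          (y \<in> V \<longrightarrow> y \<in> Ou \<and> \<not> acc y))"
        using L2' p1 by simp
      have tacc: "t \<in> V \<Longrightarrow> \<not> acc t"
        using A pre IL_call(1,2) unfolding invA_def by auto
      show "\<forall>u\<in>set (t # ts). u \<notin> stk (F, St, Ou, Inn) \<and> (u \<in> V \<longrightarrow> u \<in> inn \<sigma>2)"
        using L2 IL_call(1) p1 p2 by auto
      show "\<forall>y\<in>inn \<sigma>2 - inn (F, St, Ou, Inn). (\<forall>u\<in>succ y. u \<notin> stk (F, St, Ou, Inn) \<and> (u \<in> V \<longrightarrow> u \<in> inn \<sigma>2)) \<and>
          (y \<in> V \<longrightarrow> y \<in> out (F, St, Ou, Inn) \<and> \<not> acc y)"
      proof
        fix y assume y: "y \<in> inn \<sigma>2 - inn (F, St, Ou, Inn)"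
        show "(\<forall>u\<in>succ y. u \<notin> stk (F, St, Ou, Inn) \<and> (u \<in> V \<longrightarrow> u \<in> inn \<sigma>2)) \<and>
          (y \<in> V \<longrightarrow> y \<in> out (F, St, Ou, Inn) \<and> \<not> acc y)"
        proof (cases "y \<in> inn \<sigma>1")
          case True
          then have "y \<in> inn \<sigma>1 - Inn" using y by simp
          then show ?thesis using C2 p2 tacc by auto
        next
          case False
          then show ?thesis using L2 y by auto
        qed
      qed
    qed
  qed
next
  case (IL_skip t St Inn F Ou ts \<sigma>2)
  have p2: "F \<subseteq> fnd \<sigma>2" "Inn \<subseteq> inn \<sigma>2" "out \<sigma>2 = Ou" "stk \<sigma>2 = St"
    using pres(4)[OF IL_skip(3)] by auto
  show ?case
  proof (intro allI impI)
    fix z assume zR: "z \<in> RR" and xs: "\<forall>t'\<in>set (t # ts). (z, t') \<in> E\<^sup>*"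
      and sh: "\<forall>t\<in>stk (F, St, Ou, Inn). t \<in> RR \<and> (t, z) \<in> E\<^sup>*"
    have L: "ILP z (F, St, Ou, Inn) ts \<sigma>2" using IL_skip(4) zR xs sh by simp
    have tV: "t \<in> V \<Longrightarrow> v \<notin> F \<Longrightarrow> t \<in> Inn" using IL_skip(2) unfolding V_def by auto
    show "ILP z (F, St, Ou, Inn) (t # ts) \<sigma>2"
      using L IL_skip(1) tV p2 unfolding ILP_def by auto
  qed
qed simp_all

end

context ndfs_v begin

definition InvS :: "'n set \<Rightarrow> 'n set \<Rightarrow> 'n set \<Rightarrow> bool" where
  "InvS St Ou Inn = (St \<subseteq> Ou \<and> invB Ou St \<and> invA Ou St Inn \<and> (\<forall>x\<in>Inn \<inter> V. succ x \<inter> V \<subseteq> Inn) \<and>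
     Inn \<inter> St \<inter> V = {} \<and> Inn \<inter> V \<subseteq> Ou \<and> (\<forall>x\<in>Inn \<inter> V. acc x \<longrightarrow> (x, x) \<notin> E\<^sup>+))"

lemma InvS_push:
  assumes I: "InvS St Ou Inn" and s: "s \<notin> Ou"
  shows "InvS (insert s St) (insert s Ou) Inn"
proof -
  have a: "St \<subseteq> Ou" and b: "invB Ou St" and c: "invA Ou St Inn" and d: "\<forall>x\<in>Inn \<inter> V. succ x \<inter> V \<subseteq> Inn"
    and e: "Inn \<inter> St \<inter> V = {}" and f: "Inn \<inter> V \<subseteq> Ou" and g: "\<forall>x\<in>Inn \<inter> V. acc x \<longrightarrow> (x, x) \<notin> E\<^sup>+"
    using I unfolding InvS_def by blast+
  have b': "invB (insert s Ou) (insert s St)" using b unfolding invB_def by blast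
  have c': "invA (insert s Ou) (insert s St) Inn" using c unfolding invA_def by blast
  have e': "Inn \<inter> insert s St \<inter> V = {}" using e f s by blast
  show ?thesis unfolding InvS_def using a b' c' d e' f g by blast
qed

lemma InvS_pop_noinner:
  assumes I: "InvS St1 Ou1 Inn1" and S1: "\<forall>x\<in>succ s. x \<in> V \<longrightarrow> x \<in> Ou1"
    and na: "s \<in> V \<longrightarrow> \<not> acc s"
  shows "InvS (St1 - {s}) Ou1 Inn1"
proof -
  have a: "St1 \<subseteq> Ou1" and b: "invB Ou1 St1" and c: "invA Ou1 St1 Inn1" and d: "\<forall>x\<in>Inn1 \<inter> V. succ x \<inter> V \<subseteq> Inn1"
    and e: "Inn1 \<inter> St1 \<inter> V = {}" and f: "Inn1 \<inter> V \<subseteq> Ou1" and g: "\<forall>x\<in>Inn1 \<inter> V. acc x \<longrightarrow> (x, x) \<notin> E\<^sup>+"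
    using I unfolding InvS_def by blast+
  have b': "invB Ou1 (St1 - {s})" using b S1 unfolding invB_def by blast
  have c': "invA Ou1 (St1 - {s}) Inn1" using c na unfolding invA_def by blast
  have e': "Inn1 \<inter> (St1 - {s}) \<inter> V = {}" using e by blast
  have a': "St1 - {s} \<subseteq> Ou1" using a by blast
  show ?thesis unfolding InvS_def using a' b' c' d e' f g by blast
qed

lemma InvS_pop_inner:
  assumes I: "InvS St1 Ou1 Inn1" and sSt: "s \<in> St1" and sR: "s \<in> RR"
    and S1: "\<forall>x\<in>succ s. x \<in> V \<longrightarrow> x \<in> Ou1"
    and inc: "Inn1 \<subseteq> Inn2" and sIn: "s \<in> Inn2"
    and G1: "Inn2 - Inn1 \<subseteq> {y. (s, y) \<in> E\<^sup>*}" and G2: "Inn2 - Inn1 \<subseteq> insert s (- St1)"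
    and VC: "s \<in> V \<longrightarrow> (\<forall>y\<in>insert s (Inn2 - Inn1). \<forall>t\<in>succ y. t \<notin> St1 \<and> (t \<in> V \<longrightarrow> t \<in> Inn2)) \<and>
       (\<forall>y\<in>Inn2 - Inn1. y \<in> V \<longrightarrow> y \<in> Ou1 \<and> (y \<noteq> s \<longrightarrow> \<not> acc y))"
  shows "InvS (St1 - {s}) Ou1 Inn2"
proof -
  have a: "St1 \<subseteq> Ou1" and b: "invB Ou1 St1" and c: "invA Ou1 St1 Inn1" and d: "\<forall>x\<in>Inn1 \<inter> V. succ x \<inter> V \<subseteq> Inn1"
    and e: "Inn1 \<inter> St1 \<inter> V = {}" and f: "Inn1 \<inter> V \<subseteq> Ou1" and g: "\<forall>x\<in>Inn1 \<inter> V. acc x \<longrightarrow> (x, x) \<notin> E\<^sup>+"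
    using I unfolding InvS_def by blast+
  have sV: "s \<in> V" if "y \<in> Inn2 - Inn1" "y \<in> V" for y
  proof -
    have "(s, y) \<in> E\<^sup>*" using G1 that(1) by blast
    then show ?thesis using V_path sR that(2) by blast
  qed
  have a': "St1 - {s} \<subseteq> Ou1" using a by blast
  have b': "invB Ou1 (St1 - {s})" using b S1 unfolding invB_def by blast
  have c': "invA Ou1 (St1 - {s}) Inn2" using c sIn inc unfolding invA_def by blast
  have d': "\<forall>x\<in>Inn2 \<inter> V. succ x \<inter> V \<subseteq> Inn2"
  proof
    fix x assume x: "x \<in> Inn2 \<inter> V"
    show "succ x \<inter> V \<subseteq> Inn2"
    proof (cases "x \<in> Inn1")
      case True then show ?thesis using d x inc by blast
    next
      case False
      then have "x \<in> Inn2 - Inn1" using x by blast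
      moreover have "s \<in> V" using sV[OF _] x False by blast
      ultimately show ?thesis using VC by blast
    qed
  qed
  have e': "Inn2 \<inter> (St1 - {s}) \<inter> V = {}" using e G2 by blast
  have f': "Inn2 \<inter> V \<subseteq> Ou1"
  proof
    fix x assume x: "x \<in> Inn2 \<inter> V"
    show "x \<in> Ou1"
    proof (cases "x \<in> Inn1")
      case True then show ?thesis using f x by blast
    next
      case False
      then have "x \<in> Inn2 - Inn1" using x by blast
      moreover have "s \<in> V" using sV[OF _] x False by blast
      ultimately show ?thesis using VC x by blast
    qed
  qed
  have clp: "\<forall>y\<in>Inn2 \<inter> V. \<forall>u\<in>succ y. u \<in> V \<longrightarrow> u \<in> Inn2 \<and> u \<notin> St1"
  proof (intro ballI impI)
    fix y u assume y: "y \<in> Inn2 \<inter> V" and u: "u \<in> succ y" and uV: "u \<in> V"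
    show "u \<in> Inn2 \<and> u \<notin> St1"
    proof (cases "y \<in> Inn1")
      case True
      then have "u \<in> Inn1" using d y u uV by blast
      then show ?thesis using e inc uV by blast
    next
      case False
      then have "y \<in> Inn2 - Inn1" using y by blast
      moreover have "s \<in> V" using sV[OF _] y False by blast
      ultimately show ?thesis using VC u uV by blast
    qed
  qed
  have g': "\<forall>x\<in>Inn2 \<inter> V. acc x \<longrightarrow> (x, x) \<notin> E\<^sup>+"
  proof (intro ballI impI)
    fix x assume x: "x \<in> Inn2 \<inter> V" and ax: "acc x"
    show "(x, x) \<notin> E\<^sup>+"
    proof (cases "x \<in> Inn1")
      case True then show ?thesis using g x ax by blast
    next
      case False
      then have xn: "x \<in> Inn2 - Inn1" using x by blast
      have s_V: "s \<in> V" using sV[OF _] x False by blast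
      show ?thesis
      proof (cases "x = s")
        case False
        then show ?thesis using VC s_V xn x ax by blast
      next
        case True
        show ?thesis
        proof
          assume "(x, x) \<in> E\<^sup>+"
          then have "x \<notin> St1" using cl_path[OF clp x] x by blast
          then show False using True sSt by blast
        qed
      qed
    qed
  qed
  show ?thesis unfolding InvS_def using a' b' c' d' e' f' g' by blast
qed

end

context ndfs_v begin

lemma outer_compl:
  "outer_call succ acc pc \<sigma> x \<sigma>' \<Longrightarrow> x \<in> RR \<longrightarrow> x \<notin> stk \<sigma> \<longrightarrow> x \<notin> out \<sigma> \<longrightarrow>
     (\<forall>t\<in>stk \<sigma>. t \<in> RR \<and> (t, x) \<in> E\<^sup>*) \<longrightarrow> v \<notin> fnd \<sigma>' \<longrightarrow>
     InvS (stk \<sigma>) (out \<sigma>) (inn \<sigma>) \<longrightarrow> InvS (stk \<sigma>') (out \<sigma>') (inn \<sigma>')"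
  "outer_loop succ acc pc \<sigma> xs \<sigma>' \<Longrightarrow> (\<forall>x\<in>set xs. x \<in> RR \<and> (\<forall>t\<in>stk \<sigma>. t \<in> RR \<and> (t, x) \<in> E\<^sup>*)) \<longrightarrow>
     v \<notin> fnd \<sigma>' \<longrightarrow> InvS (stk \<sigma>) (out \<sigma>) (inn \<sigma>) \<longrightarrow>
     InvS (stk \<sigma>') (out \<sigma>') (inn \<sigma>') \<and> (\<forall>x\<in>set xs. x \<in> V \<longrightarrow> x \<in> out \<sigma>')"
  "inner_call succ acc pc \<sigma> x \<sigma>' \<Longrightarrow> True"
  "inner_loop succ acc pc \<sigma> xs \<sigma>' \<Longrightarrow> True"
proof (induction rule: outer_call_outer_loop_inner_call_inner_loop.inducts)
  case (OC_inner xs s F St Ou Inn F1 St1 Ou1 Inn1 F2 St2 Ou2 Inn2)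
  show ?case
  proof (intro impI)
    assume sR: "s \<in> RR" and sSt: "s \<notin> stk (F, St, Ou, Inn)" and sOu: "s \<notin> out (F, St, Ou, Inn)"
      and sh: "\<forall>t\<in>stk (F, St, Ou, Inn). t \<in> RR \<and> (t, s) \<in> E\<^sup>*"
      and vF: "v \<notin> fnd (F2, St2 - {s}, Ou2, Inn2)"
      and I0: "InvS (stk (F, St, Ou, Inn)) (out (F, St, Ou, Inn)) (inn (F, St, Ou, Inn))"
    have p1: "F \<subseteq> F1" "Inn \<subseteq> Inn1" "insert s Ou \<subseteq> Ou1" "St1 = insert s St"
      using pres(2)[OF OC_inner(3)] by simp_all
    have p2: "F1 \<subseteq> F2" "insert s Inn1 \<subseteq> Inn2" "Ou2 = Ou1" "St2 = St1"
      using pres(3)[OF OC_inner(7)] by simp_all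
    have Ip: "InvS (stk (F, insert s St, insert s Ou, Inn)) (out (F, insert s St, insert s Ou, Inn))
        (inn (F, insert s St, insert s Ou, Inn))"
      using InvS_push[of St Ou Inn s] I0 sOu by simp
    have vF1: "v \<notin> fnd (F1, St1, Ou1, Inn1)" using vF p2 by auto
    have shx: "\<forall>x\<in>set xs. x \<in> RR \<and> (\<forall>t\<in>stk (F, insert s St, insert s Ou, Inn). t \<in> RR \<and> (t, x) \<in> E\<^sup>*)"
    proof
      fix x assume "x \<in> set xs"
      then have xs: "x \<in> succ s" using OC_inner(2) by simp
      have "x \<in> RR" using succ_RR[OF sR xs] .
      moreover have "(s, x) \<in> E\<^sup>*" using xs by (simp add: r_into_rtrancl)
      ultimately show "x \<in> RR \<and> (\<forall>t\<in>stk (F, insert s St, insert s Ou, Inn). t \<in> RR \<and> (t, x) \<in> E\<^sup>*)"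
        using sh sR by (auto intro: rtrancl_trans)
    qed
    have R1: "InvS (stk (F1, St1, Ou1, Inn1)) (out (F1, St1, Ou1, Inn1)) (inn (F1, St1, Ou1, Inn1)) \<and>
        (\<forall>x\<in>set xs. x \<in> V \<longrightarrow> x \<in> out (F1, St1, Ou1, Inn1))"
      using mp[OF mp[OF mp[OF OC_inner(4) shx] vF1] Ip] .
    have I1: "InvS St1 Ou1 Inn1" using R1 by simp
    have S1: "\<forall>x\<in>succ s. x \<in> V \<longrightarrow> x \<in> Ou1" using R1 OC_inner(2) by simp
    have shi: "\<forall>t\<in>stk (F1, St1, Ou1, Inn1). t \<in> RR \<and> (t, s) \<in> E\<^sup>*" using sh p1 sR by simp
    have C: "ICP s (F1, St1, Ou1, Inn1) s (F2, St2, Ou2, Inn2)"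
      using inner_compl(3)[OF OC_inner(7)] sR shi by blast
    have G1: "Inn2 - Inn1 \<subseteq> {y. (s, y) \<in> E\<^sup>*}" and G2: "Inn2 - Inn1 \<subseteq> insert s (- St1)"
      using C[unfolded ICP_def, THEN conjunct1] by simp_all
    have VC: "s \<in> V \<longrightarrow> (\<forall>y\<in>insert s (Inn2 - Inn1). \<forall>t\<in>succ y. t \<notin> St1 \<and> (t \<in> V \<longrightarrow> t \<in> Inn2)) \<and>
       (\<forall>y\<in>Inn2 - Inn1. y \<in> V \<longrightarrow> y \<in> Ou1 \<and> (y \<noteq> s \<longrightarrow> \<not> acc y))"
    proof
      assume sV: "s \<in> V"
      have vF2: "v \<notin> fnd (F2, St2, Ou2, Inn2)" using vF by simp
      have B1: "invB (out (F1, St1, Ou1, Inn1)) (stk (F1, St1, Ou1, Inn1))" using I1 unfolding InvS_def by simp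
      have A1: "invA (out (F1, St1, Ou1, Inn1)) (stk (F1, St1, Ou1, Inn1)) (inn (F1, St1, Ou1, Inn1))"
        using I1 unfolding InvS_def by simp
      have X1: "s \<in> V \<longrightarrow> s \<in> out (F1, St1, Ou1, Inn1) \<and> (s \<in> stk (F1, St1, Ou1, Inn1) \<longrightarrow> succ s \<inter> V \<subseteq> out (F1, St1, Ou1, Inn1))"
        using p1 S1 by auto
      note C2 = mp[OF mp[OF mp[OF mp[OF mp[OF C[unfolded ICP_def, THEN conjunct2] sV] vF2] B1] A1] X1]
      show "(\<forall>y\<in>insert s (Inn2 - Inn1). \<forall>t\<in>succ y. t \<notin> St1 \<and> (t \<in> V \<longrightarrow> t \<in> Inn2)) \<and>
       (\<forall>y\<in>Inn2 - Inn1. y \<in> V \<longrightarrow> y \<in> Ou1 \<and> (y \<noteq> s \<longrightarrow> \<not> acc y))"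
        using C2 by (simp only: acc_defs prod.sel)
    qed
    have "InvS (St1 - {s}) Ou1 Inn2"
      by (rule InvS_pop_inner[OF I1 _ sR S1 _ _ G1 G2 VC]) (use p1 p2 in auto)
    then show "InvS (stk (F2, St2 - {s}, Ou2, Inn2)) (out (F2, St2 - {s}, Ou2, Inn2)) (inn (F2, St2 - {s}, Ou2, Inn2))"
      using p2 by simp
  qed
next
  case (OC_noinner xs s F St Ou Inn F1 St1 Ou1 Inn1)
  show ?case
  proof (intro impI)
    assume sR: "s \<in> RR" and sSt: "s \<notin> stk (F, St, Ou, Inn)" and sOu: "s \<notin> out (F, St, Ou, Inn)"
      and sh: "\<forall>t\<in>stk (F, St, Ou, Inn). t \<in> RR \<and> (t, s) \<in> E\<^sup>*"
      and vF: "v \<notin> fnd (F1, St1 - {s}, Ou1, Inn1)"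
      and I0: "InvS (stk (F, St, Ou, Inn)) (out (F, St, Ou, Inn)) (inn (F, St, Ou, Inn))"
    have p1: "F \<subseteq> F1" "Inn \<subseteq> Inn1" "insert s Ou \<subseteq> Ou1" "St1 = insert s St"
      using pres(2)[OF OC_noinner(3)] by simp_all
    have Ip: "InvS (stk (F, insert s St, insert s Ou, Inn)) (out (F, insert s St, insert s Ou, Inn))
        (inn (F, insert s St, insert s Ou, Inn))"
      using InvS_push[of St Ou Inn s] I0 sOu by simp
    have vF1: "v \<notin> fnd (F1, St1, Ou1, Inn1)" using vF by simp
    have shx: "\<forall>x\<in>set xs. x \<in> RR \<and> (\<forall>t\<in>stk (F, insert s St, insert s Ou, Inn). t \<in> RR \<and> (t, x) \<in> E\<^sup>*)"
    proof
      fix x assume "x \<in> set xs"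
      then have xs: "x \<in> succ s" using OC_noinner(2) by simp
      have "x \<in> RR" using succ_RR[OF sR xs] .
      moreover have "(s, x) \<in> E\<^sup>*" using xs by (simp add: r_into_rtrancl)
      ultimately show "x \<in> RR \<and> (\<forall>t\<in>stk (F, insert s St, insert s Ou, Inn). t \<in> RR \<and> (t, x) \<in> E\<^sup>*)"
        using sh sR by (auto intro: rtrancl_trans)
    qed
    have R1: "InvS (stk (F1, St1, Ou1, Inn1)) (out (F1, St1, Ou1, Inn1)) (inn (F1, St1, Ou1, Inn1)) \<and>
        (\<forall>x\<in>set xs. x \<in> V \<longrightarrow> x \<in> out (F1, St1, Ou1, Inn1))"
      using mp[OF mp[OF mp[OF OC_noinner(4) shx] vF1] Ip] .
    have I1: "InvS St1 Ou1 Inn1" using R1 by simp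
    have S1: "\<forall>x\<in>succ s. x \<in> V \<longrightarrow> x \<in> Ou1" using R1 OC_noinner(2) by simp
    have na: "s \<in> V \<longrightarrow> \<not> acc s" using OC_noinner(5) vF unfolding V_def by auto
    show "InvS (stk (F1, St1 - {s}, Ou1, Inn1)) (out (F1, St1 - {s}, Ou1, Inn1)) (inn (F1, St1 - {s}, Ou1, Inn1))"
      using InvS_pop_noinner[OF I1 S1 na] by simp
  qed
next
  case (OL_nil \<sigma>)
  then show ?case by simp
next
  case (OL_call t Ou St F Inn \<sigma>1 ts \<sigma>2)
  have p1: "F \<subseteq> fnd \<sigma>1" "Ou \<subseteq> out \<sigma>1" "stk \<sigma>1 = St" "t \<in> out \<sigma>1"
    using pres(1)[OF OL_call(4)] OL_call(2) by simp_all
  have p2: "fnd \<sigma>1 \<subseteq> fnd \<sigma>2" "out \<sigma>1 \<subseteq> out \<sigma>2"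
    using pres(2)[OF OL_call(6)] by simp_all
  show ?case
  proof (intro impI)
    assume sh: "\<forall>x\<in>set (t # ts). x \<in> RR \<and> (\<forall>u\<in>stk (F, St, Ou, Inn). u \<in> RR \<and> (u, x) \<in> E\<^sup>*)"
      and vF: "v \<notin> fnd \<sigma>2" and I0: "InvS (stk (F, St, Ou, Inn)) (out (F, St, Ou, Inn)) (inn (F, St, Ou, Inn))"
    have h1: "t \<in> RR" "t \<notin> stk (F, St, Ou, Inn)" "t \<notin> out (F, St, Ou, Inn)"
      "\<forall>u\<in>stk (F, St, Ou, Inn). u \<in> RR \<and> (u, t) \<in> E\<^sup>*" "v \<notin> fnd \<sigma>1"
      using sh OL_call(1,2) vF p2 by auto
    have I1: "InvS (stk \<sigma>1) (out \<sigma>1) (inn \<sigma>1)"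
      using mp[OF mp[OF mp[OF mp[OF mp[OF mp[OF OL_call(5) h1(1)] h1(2)] h1(3)] h1(4)] h1(5)] I0] .
    have sh2: "\<forall>x\<in>set ts. x \<in> RR \<and> (\<forall>u\<in>stk \<sigma>1. u \<in> RR \<and> (u, x) \<in> E\<^sup>*)"
      using sh p1(3) by simp
    have R2: "InvS (stk \<sigma>2) (out \<sigma>2) (inn \<sigma>2) \<and> (\<forall>x\<in>set ts. x \<in> V \<longrightarrow> x \<in> out \<sigma>2)"
      using mp[OF mp[OF mp[OF OL_call(7) sh2] vF] I1] .
    show "InvS (stk \<sigma>2) (out \<sigma>2) (inn \<sigma>2) \<and> (\<forall>x\<in>set (t # ts). x \<in> V \<longrightarrow> x \<in> out \<sigma>2)"
      using R2 p1(4) p2(2) by auto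
  qed
next
  case (OL_skip t Ou St F Inn ts \<sigma>2)
  have p2: "F \<subseteq> fnd \<sigma>2" "Ou \<subseteq> out \<sigma>2"
    using pres(2)[OF OL_skip(2)] by simp_all
  show ?case
  proof (intro impI)
    assume sh: "\<forall>x\<in>set (t # ts). x \<in> RR \<and> (\<forall>u\<in>stk (F, St, Ou, Inn). u \<in> RR \<and> (u, x) \<in> E\<^sup>*)"
      and vF: "v \<notin> fnd \<sigma>2" and I0: "InvS (stk (F, St, Ou, Inn)) (out (F, St, Ou, Inn)) (inn (F, St, Ou, Inn))"
    have sh2: "\<forall>x\<in>set ts. x \<in> RR \<and> (\<forall>u\<in>stk (F, St, Ou, Inn). u \<in> RR \<and> (u, x) \<in> E\<^sup>*)"
      using sh by simp
    have R2: "InvS (stk \<sigma>2) (out \<sigma>2) (inn \<sigma>2) \<and> (\<forall>x\<in>set ts. x \<in> V \<longrightarrow> x \<in> out \<sigma>2)"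
      using mp[OF mp[OF mp[OF OL_skip(3) sh2] vF] I0] .
    have StOu: "St \<subseteq> Ou" using I0 unfolding InvS_def by simp
    have "t \<in> V \<longrightarrow> t \<in> out \<sigma>2"
    proof
      assume tV: "t \<in> V"
      have "\<not> pc t \<subseteq> F" using tV vF p2 unfolding V_def by blast
      then have "t \<in> Ou \<or> t \<in> St" using OL_skip(1) by blast
      then show "t \<in> out \<sigma>2" using StOu p2 by blast
    qed
    then show "InvS (stk \<sigma>2) (out \<sigma>2) (inn \<sigma>2) \<and> (\<forall>x\<in>set (t # ts). x \<in> V \<longrightarrow> x \<in> out \<sigma>2)"
      using R2 by simp
  qed
qed simp_all

lemma complete:
  assumes c: "cndfs inits succ acc pc Acc" and G: "v \<in> Good"
  shows "v \<in> Acc"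
proof (rule ccontr)
  assume nA: "v \<notin> Acc"
  obtain xs \<sigma> where xs: "distinct xs" "set xs = inits" and l: "outer_loop succ acc pc ({}, {}, {}, {}) xs \<sigma>"
    and A: "Acc = fst \<sigma>"
    using c unfolding cndfs_def by blast
  have sh: "\<forall>x\<in>set xs. x \<in> RR \<and> (\<forall>t\<in>stk ({}, {}, {}, {}). t \<in> RR \<and> (t, x) \<in> E\<^sup>*)"
    using xs inits_RR by simp
  have vF: "v \<notin> fnd \<sigma>" using nA A by simp
  have I0: "InvS (stk ({}, {}, {}, {})) (out ({}, {}, {}, {})) (inn ({}, {}, {}, {}))"
    unfolding InvS_def invA_def invB_def by simp
  have R: "InvS (stk \<sigma>) (out \<sigma>) (inn \<sigma>) \<and> (\<forall>x\<in>set xs. x \<in> V \<longrightarrow> x \<in> out \<sigma>)"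
    using mp[OF mp[OF mp[OF outer_compl(2)[OF l] sh] vF] I0] .
  have st: "stk \<sigma> = {}" using pres(2)[OF l] by simp
  obtain a where a: "a \<in> RR" "acc a" "(a, a) \<in> E\<^sup>+" "v \<in> pc a" using G unfolding Good_def by blast
  have aV: "a \<in> V" using a unfolding V_def by simp
  obtain i where i: "i \<in> inits" "(i, a) \<in> E\<^sup>*" using a(1) unfolding reach_def by blast
  have iV: "i \<in> V" using V_path[OF i(2) inits_RR[OF i(1)] aV] .
  have iO: "i \<in> out \<sigma>" using R i(1) xs(2) iV by blast
  have B: "\<forall>x\<in>out \<sigma>. x \<in> V \<longrightarrow> succ x \<inter> V \<subseteq> out \<sigma>"
    using R st unfolding InvS_def invB_def by simp
  have aO: "a \<in> out \<sigma>" using B_path[OF B iO iV i(2)] aV by blast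
  have aI: "a \<in> inn \<sigma>" using R st aO aV a(2) unfolding InvS_def invA_def by simp
  have "(a, a) \<notin> E\<^sup>+" using R aI aV a(2) unfolding InvS_def by blast
  then show False using a(3) by simp
qed

end

context ndfs begin

lemma run_RR: "\<rho> 0 \<in> inits \<Longrightarrow> \<forall>i. \<rho> (Suc i) \<in> succ (\<rho> i) \<Longrightarrow> \<rho> k \<in> RR"
  by (induction k) (auto intro: inits_RR succ_RR)

lemma run_path: "\<forall>i. \<rho> (Suc i) \<in> succ (\<rho> i) \<Longrightarrow> j \<le> k \<Longrightarrow> (\<rho> j, \<rho> k) \<in> E\<^sup>*"
proof (induction k)
  case 0 then show ?case by simp
next
  case (Suc k)
  show ?case
  proof (cases "j = Suc k")
    case True then show ?thesis by simp
  next
    case False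
    then have "(\<rho> j, \<rho> k) \<in> E\<^sup>*" using Suc by simp
    moreover have "(\<rho> k, \<rho> (Suc k)) \<in> E" using Suc.prems(1) by simp
    ultimately show ?thesis by (rule rtrancl_into_rtrancl)
  qed
qed

lemma run_tpath: "\<forall>i. \<rho> (Suc i) \<in> succ (\<rho> i) \<Longrightarrow> j < k \<Longrightarrow> (\<rho> j, \<rho> k) \<in> E\<^sup>+"
proof -
  assume r: "\<forall>i. \<rho> (Suc i) \<in> succ (\<rho> i)" and jk: "j < k"
  have "(\<rho> j, \<rho> (Suc j)) \<in> E" using r by simp
  moreover have "(\<rho> (Suc j), \<rho> k) \<in> E\<^sup>*" using run_path[OF r] jk by simp
  ultimately show ?thesis by (rule rtrancl_into_trancl2)
qed

lemma run_Good:
  assumes r0: "\<rho> 0 \<in> inits" and r: "\<forall>i. \<rho> (Suc i) \<in> succ (\<rho> i)"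
    and inf: "infinite {i. acc (\<rho> i)}" and rv: "\<forall>i. v \<in> pc (\<rho> i)"
  shows "v \<in> Good"
proof -
  let ?I = "{i. acc (\<rho> i)}"
  have "\<rho> ` ?I \<subseteq> RR" using run_RR[OF r0 r] by blast
  then have "finite (\<rho> ` ?I)" using finR finite_subset by blast
  then have "\<not> inj_on \<rho> ?I" using inf finite_imageD by blast
  then obtain i j where ij: "i \<in> ?I" "j \<in> ?I" "i \<noteq> j" "\<rho> i = \<rho> j" unfolding inj_on_def by blast
  have "\<exists>p q. p < q \<and> acc (\<rho> p) \<and> \<rho> p = \<rho> q"
  proof (cases "i < j")
    case True then show ?thesis using ij by blast
  next
    case False then have "j < i" using ij(3) by simp
    moreover have "acc (\<rho> j)" "\<rho> j = \<rho> i" using ij by auto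
    ultimately show ?thesis by blast
  qed
  then obtain p q where pq: "p < q" "acc (\<rho> p)" "\<rho> p = \<rho> q" by blast
  have "(\<rho> p, \<rho> p) \<in> E\<^sup>+" using run_tpath[OF r pq(1)] pq(3) by simp
  then show ?thesis unfolding Good_def using run_RR[OF r0 r] pq rv by blast
qed

lemma Good_run:
  assumes G: "v \<in> Good"
  shows "\<exists>\<rho>. \<rho> 0 \<in> inits \<and> (\<forall>i. \<rho> (Suc i) \<in> succ (\<rho> i)) \<and> infinite {i. acc (\<rho> i)} \<and> (\<forall>i. v \<in> pc (\<rho> i))"
proof -
  obtain a where a: "a \<in> RR" "acc a" "(a, a) \<in> E\<^sup>+" "v \<in> pc a" using G unfolding Good_def by blast
  obtain i0 where i0: "i0 \<in> inits" "(i0, a) \<in> E\<^sup>*" using a(1) unfolding reach_def by blast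
  obtain n where "(i0, a) \<in> E ^^ n" using i0(2) rtrancl_power by blast
  then obtain f where f: "f 0 = i0" "f n = a" "\<forall>i<n. (f i, f (Suc i)) \<in> E"
    using relpow_fun_conv by metis
  obtain m where m: "m > 0" "(a, a) \<in> E ^^ m" using a(3) trancl_power by blast
  then obtain g where g: "g 0 = a" "g m = a" "\<forall>i<m. (g i, g (Suc i)) \<in> E"
    using relpow_fun_conv by metis
  define \<rho> where "\<rho> k = (if k \<le> n then f k else g ((k - n) mod m))" for k
  have ge: "\<rho> k = g ((k - n) mod m)" if "n \<le> k" for k
  proof (cases "k = n")
    case True then show ?thesis using f g unfolding \<rho>_def by simp
  next
    case False then show ?thesis using that unfolding \<rho>_def by simp
  qed
  have r0: "\<rho> 0 \<in> inits" using f i0 unfolding \<rho>_def by simp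
  have r: "\<forall>k. \<rho> (Suc k) \<in> succ (\<rho> k)"
  proof
    fix k
    show "\<rho> (Suc k) \<in> succ (\<rho> k)"
    proof (cases "k < n")
      case True then show ?thesis using f(3) unfolding \<rho>_def by simp
    next
      case False
      define j where "j = (k - n) mod m"
      have j: "j < m" using m(1) unfolding j_def by simp
      have rk: "\<rho> k = g j" using ge False unfolding j_def by simp
      have "Suc k - n = Suc (k - n)" using False by simp
      then have "(Suc k - n) mod m = Suc j mod m" unfolding j_def by (simp add: mod_Suc_eq)
      then have rs: "\<rho> (Suc k) = g (Suc j mod m)" using ge[of "Suc k"] False by simp
      show ?thesis
      proof (cases "Suc j < m")
        case True then show ?thesis using rs rk g(3) j by simp
      next
        case False
        then have "Suc j = m" using j by simp
        then show ?thesis using rs rk g j by (metis egr_iff lessI mod_self)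
      qed
    qed
  qed
  have ra: "\<rho> (n + q * m) = a" for q using ge[of "n + q * m"] g(1) by simp
  have inf: "infinite {i. acc (\<rho> i)}"
    unfolding infinite_nat_iff_unbounded_le
  proof
    fix b
    have "b * 1 \<le> b * m" using m(1) by (intro mult_le_mono2) simp
    then have "b \<le> n + b * m" by linarith
    then show "\<exists>k\<ge>b. k \<in> {i. acc (\<rho> i)}" using ra[of b] a(2) by blast
  qed
  have rv: "\<forall>k. v \<in> pc (\<rho> k)"
  proof
    fix k
    have "k * 1 \<le> k * m" using m(1) by (intro mult_le_mono2) simp
    then have "k \<le> n + k * m" by linarith
    then have "(\<rho> k, a) \<in> E\<^sup>*" using run_path[OF r] ra[of k] by metis
    then have "pc a \<subseteq> pc (\<rho> k)" using path_RR run_RR[OF r0 r] by blast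
    then show "v \<in> pc (\<rho> k)" using a(4) by blast
  qed
  show ?thesis using r0 r inf rv by blast
qed

lemma main:
  assumes fi: "finite inits"
  shows "(\<exists>Acc. cndfs inits succ acc pc Acc) \<and>
    (\<forall>Acc. cndfs inits succ acc pc Acc \<longrightarrow> (\<forall>v. v \<in> Acc \<longleftrightarrow>
       (\<exists>\<rho>. \<rho> 0 \<in> inits \<and> (\<forall>i. \<rho> (Suc i) \<in> succ (\<rho> i)) \<and> infinite {i. acc (\<rho> i)} \<and> (\<forall>i. v \<in> pc (\<rho> i)))))"
proof (intro conjI allI impI)
  show "\<exists>Acc. cndfs inits succ acc pc Acc" using cndfs_ex[OF fi] .
next
  fix Acc v assume c: "cndfs inits succ acc pc Acc"
  have nd: "ndfs inits succ pc" using finR monoR by (rule ndfs.intro)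
  have nv: "ndfs_v inits succ pc" using nd by (simp add: ndfs_v_def)
  have "v \<in> Acc \<longleftrightarrow> v \<in> Good"
  proof
    assume "v \<in> Acc"
    obtain xs \<sigma> where xs: "distinct xs" "set xs = inits" and l: "outer_loop succ acc pc ({}, {}, {}, {}) xs \<sigma>"
      and A: "Acc = fst \<sigma>"
      using c unfolding cndfs_def by blast
    have "\<forall>x\<in>set xs. x \<in> RR \<and> (\<forall>t\<in>stk ({}, {}, {}, {}). (t, x) \<in> E\<^sup>*)"
      using xs inits_RR by simp
    then have "fnd \<sigma> \<subseteq> Good" using sound(2)[OF l] by simp
    then show "v \<in> Good" using \<open>v \<in> Acc\<close> A by auto
  next
    assume "v \<in> Good"
    then show "v \<in> Acc" using ndfs_v.complete[OF nv c] by blast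
  qed
  also have "\<dots> \<longleftrightarrow> (\<exists>\<rho>. \<rho> 0 \<in> inits \<and> (\<forall>i. \<rho> (Suc i) \<in> succ (\<rho> i)) \<and> infinite {i. acc (\<rho> i)} \<and> (\<forall>i. v \<in> pc (\<rho> i)))"
    using Good_run run_Good by blast
  finally show "v \<in> Acc \<longleftrightarrow> (\<exists>\<rho>. \<rho> 0 \<in> inits \<and> (\<forall>i. \<rho> (Suc i) \<in> succ (\<rho> i)) \<and> infinite {i. acc (\<rho> i)} \<and> (\<forall>i. v \<in> pc (\<rho> i)))" .
qed

end

lemma atom_apply_mono: "Y \<in> atom_apply X a \<Longrightarrow> fst X \<subseteq> fst Y"
  unfolding atom_apply_def by (auto simp: Let_def split: prod.splits if_splits)

lemma guard_apply_mono: "Y \<in> guard_apply X as \<Longrightarrow> fst X \<subseteq> fst Y"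
proof (induction as arbitrary: X)
  case Nil then show ?case by simp
next
  case (Cons a as)
  then obtain Z where "Z \<in> atom_apply X a" "Y \<in> guard_apply Z as" by auto
  then show ?case using atom_apply_mono Cons.IH by blast
qed

lemma canon_steps_mono: "Y \<in> canon_steps X ts \<Longrightarrow> fst X \<subseteq> fst Y"
proof (induction ts arbitrary: X)
  case Nil then show ?case by simp
next
  case (Cons t ts)
  then obtain Z where "Z \<in> canon_step X t" "Y \<in> canon_steps Z ts" by auto
  moreover have "fst X \<subseteq> fst Z"
  proof -
    obtain k i j where t: "t = (k, i, j)" by (cases t) auto
    have "Z \<in> atom_apply X (i, j, snd (snd X i k) \<and> snd (snd X k j), xadd (fst (snd X i k)) (fst (snd X k j)))"
      using \<open>Z \<in> canon_step X t\<close> unfolding canon_step_def t Let_def by simp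
    then show ?thesis by (rule atom_apply_mono)
  qed
  ultimately show ?case using Cons.IH by blast
qed

lemma canon_mono: "Y \<in> canon n X \<Longrightarrow> fst X \<subseteq> fst Y"
  unfolding canon_def using canon_steps_mono by blast

lemma pset_mk[simp]: "pset (mk_state n l C D) = csem C"
  unfolding pset_def mk_state_def by simp

lemma csem_anti: "C \<subseteq> C' \<Longrightarrow> csem C' \<subseteq> csem C"
  unfolding csem_def by blast

lemma sym_step_mono: "sym_step A Q S \<Longrightarrow> pset S \<subseteq> pset Q"
proof -
  assume "sym_step A Q S"
  then obtain l C D g R l' C2 D2 C3 D3 C4 D4 C5 D5 where
    h: "Q = mk_state (nclk A) l C D"
      "(C2, D2) \<in> guard_apply (C, D) (map to_xatom g)"
      "(C3, D3) \<in> canon (nclk A) (C2, D2)"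
      "(C4, D4) \<in> guard_apply (C3, up (resetD D3 R)) (map to_xatom (inv A l'))"
      "(C5, D5) \<in> canon (nclk A) (C4, D4)"
      "S = mk_state (nclk A) l' C5 D5"
    unfolding sym_step_def by blast
  have "C \<subseteq> C2" using guard_apply_mono[OF h(2)] by simp
  also have "C2 \<subseteq> C3" using canon_mono[OF h(3)] by simp
  also have "C3 \<subseteq> C4" using guard_apply_mono[OF h(4)] by simp
  also have "C4 \<subseteq> C5" using canon_mono[OF h(5)] by simp
  finally show ?thesis using h(1,6) csem_anti by simp
qed

lemma reach_in:
  assumes "Q \<in> reach (abs_init A lb ub \<alpha>) (\<lambda>Q. {Q'. abs_step A \<alpha> Q Q'})"
  shows "\<exists>S\<in>absdom A lb ub \<alpha>. Q \<in> \<alpha> S"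
proof -
  obtain x where x: "x \<in> abs_init A lb ub \<alpha>" "(x, Q) \<in> (egr (\<lambda>Q. {Q'. abs_step A \<alpha> Q Q'}))\<^sup>*"
    using assms unfolding reach_def by blast
  show ?thesis using x(2)
  proof (induction rule: rtrancl_induct)
    case base
    then show ?case using x(1) unfolding abs_init_def by (blast intro: dom_init)
  next
    case (step y z)
    then obtain S0 where S0: "S0 \<in> absdom A lb ub \<alpha>" "y \<in> \<alpha> S0" by blast
    obtain S where "sym_step A y S" "z \<in> \<alpha> S" using step.hyps(2) unfolding egr_def abs_step_def by blast
    then show ?case using S0 by (blast intro: dom_step)
  qed
qed

theorem theorem2:
  fixes A :: "('l, 'p::finite) ptba"
    and lb ub :: "'p \<Rightarrow> int"
    and \<alpha> :: "('l, 'p) sstate \<Rightarrow> ('l, 'p) sstate set"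
  assumes "ptba A"
    and "is_abstraction A lb ub \<alpha>"
    and "finite_abstraction A lb ub \<alpha>"
  shows "(\<exists>Accepted. CumulativeNDFS_out A lb ub \<alpha> Accepted) \<and>
         (\<forall>Accepted. CumulativeNDFS_out A lb ub \<alpha> Accepted \<longrightarrow>
            (\<forall>v. v \<in> Accepted \<longleftrightarrow>
               (\<exists>\<rho>. accepting_run A lb ub \<alpha> \<rho> \<and> respects_val v \<rho>)))"
proof -
  let ?I = "abs_init A lb ub \<alpha>"
  let ?s = "\<lambda>Q. {Q'. abs_step A \<alpha> Q Q'}"
  let ?acc = "\<lambda>Q. fst Q \<in> accs A"
  let ?U = "\<Union>S\<in>absdom A lb ub \<alpha>. \<alpha> S"
  have finU: "finite ?U" using assms(3) unfolding finite_abstraction_def .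
  have RU: "reach ?I ?s \<subseteq> ?U"
  proof
    fix Q assume h: "Q \<in> reach ?I ?s"
    show "Q \<in> ?U" using reach_in[OF h] by blast
  qed
  have IU: "?I \<subseteq> ?U" unfolding abs_init_def by (blast intro: dom_init)
  have mono: "pset y \<subseteq> pset x" if x: "x \<in> reach ?I ?s" and y: "y \<in> ?s x" for x y
  proof -
    obtain S0 where S0: "S0 \<in> absdom A lb ub \<alpha>" "x \<in> \<alpha> S0" using reach_in[OF x] by blast
    obtain S where S: "sym_step A x S" "y \<in> \<alpha> S" using y unfolding abs_step_def by blast
    have Sd: "S \<in> absdom A lb ub \<alpha>" using S0 S(1) by (blast intro: dom_step)
    obtain C' D' where "y = mk_state (nclk A) (fst S) C' D'" "csem C' \<subseteq> pset S"
      using assms(2) Sd S(2) unfolding is_abstraction_def by blast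
    then have "pset y \<subseteq> pset S" by simp
    also have "\<dots> \<subseteq> pset x" using sym_step_mono[OF S(1)] .
    finally show ?thesis .
  qed
  have nd: "ndfs ?I ?s pset"
    by (rule ndfs.intro) (use finU RU mono in \<open>auto intro: finite_subset\<close>)
  have M: "(\<exists>Acc. cndfs ?I ?s ?acc pset Acc) \<and>
    (\<forall>Acc. cndfs ?I ?s ?acc pset Acc \<longrightarrow> (\<forall>v. v \<in> Acc \<longleftrightarrow>
       (\<exists>\<rho>. \<rho> 0 \<in> ?I \<and> (\<forall>i. \<rho> (Suc i) \<in> ?s (\<rho> i)) \<and> infinite {i. ?acc (\<rho> i)} \<and> (\<forall>i. v \<in> pset (\<rho> i)))))"
    using ndfs.main[OF nd finite_subset[OF IU finU], of ?acc] by blast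
  have run_eq: "accepting_run A lb ub \<alpha> \<rho> \<and> respects_val v \<rho> \<longleftrightarrow>
     \<rho> 0 \<in> ?I \<and> (\<forall>i. \<rho> (Suc i) \<in> ?s (\<rho> i)) \<and> infinite {i. ?acc (\<rho> i)} \<and> (\<forall>i. v \<in> pset (\<rho> i))" for \<rho> v
    unfolding accepting_run_def abs_run_def respects_val_def by auto
  show ?thesis using M unfolding CumulativeNDFS_out_def run_eq by simp
qed

end
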